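(* It holds that \[ \text{Regret}(T) = \sum_{k=1}^K \bigl(V^{\pi^*,k}_1(x^k_1) - V^{\pi^k,k}_1(x^k_1)\bigr) = \underbrace{\sum_{k=1}^K\sum_{h=1}^H \mathbb{E}_{\pi^*} \bigl[ \langle Q^{k}_h(x_h,\cdot), \pi^*_h(\cdot\,|\,x_h) - \pi^k_h(\cdot\,|\,x_h) \rangle \,\big|\, x_1=x^k_1\bigr]}_{\rm (i)} + \underbrace{\mathcal{M}_{K, H, 2}}_{\rm (ii)} +\underbrace{ \sum_{k=1}^K\sum_{h=1}^H\bigl( \mathbb{E}_{\pi^*}[\iota^{k}_h(x_h,a_h)\,|\,x_1=x^k_1] - \iota^{k}_h(x^k_h,a^k_h)\bigr)}_{\rm (iii)}, \] which is independent of the linear-MDP assumption. Here $\{\mathcal{M}_{k,h,m}\}_{(k,h,m)\in[K]\times[H]\times[2]}$ is a martingale adapted to the filtration $\{\mathcal{F}_{k,h,m}\}_{(k,h,m)\in[K]\times[H]\times[2]}$, both with respect to the timestep index $t(k,h,m)=(k-1)\cdot 2H+(h-1)\cdot 2+m$.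
   Context: Consider an episodic MDP with state space $\mathcal{S}$, finite action space $\mathcal{A}$, horizon $H$, transition kernels $\mathcal{P}_h(\cdot\,|\,x,a)$ (operator form $(\mathbb{P}_h f)(x,a)=\mathbb{E}[f(x')\,|\,x'\sim\mathcal{P}_h(\cdot\,|\,x,a)]$), fixed initial state $x^k_1=x_1$, and reward functions $r^k_h:\mathcal{S}\times\mathcal{A}\to[0,1]$ chosen (possibly adversarially, depending on past trajectories) at the start of episode $k$. In episode $k$ the agent plays policy $\pi^k=\{\pi^k_h\}_{h=1}^H$, generating $(x^k_h,a^k_h)_{h=1}^H$ with $a^k_h\sim\pi^k_h(\cdot\,|\,x^k_h)$, $x^k_{h+1}\sim\mathcal{P}_h(\cdot\,|\,x^k_h,a^k_h)$; $T=HK$. $V^{\pi,k}_h(x)=\mathbb{E}_\pi[\sum_{i=h}^H r^k_i(x_i,a_i)\,|\,x_h=x]$, $Q^{\pi,k}_h(x,a)$ analogously, and $\text{Regret}(T)=\max_{\pi}\sum_{k=1}^K(V^{\pi,k}_1(x^k_1)-V^{\pi^k,k}_1(x^k_1))$. The policies $\pi^k$ and estimated functions $Q^k_h:\mathcal{S}\times\mathcal{A}\to[0,H-h+1]$ are produced by the algorithm OPPO: $\pi^0_h$ uniform, $Q^0_h=0$; $\pi^k_h(\cdot\,|\,x)\propto\pi^{k-1}_h(\cdot\,|\,x)\exp(\alpha Q^{k-1}_h(x,\cdot))$; after episode $k$, with $V^k_{H+1}=0$, for $h=H,\dots,1$: $\Lambda^k_h=\sum_{\tau=1}^{k-1}\phi^\tau_h(x^\tau_h,a^\tau_h)\phi^\tau_h(x^\tau_h,a^\tau_h)^\top+\lambda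 I$, $w^k_h=(\Lambda^k_h)^{-1}\sum_{\tau=1}^{k-1}\phi^\tau_h(x^\tau_h,a^\tau_h)V^\tau_{h+1}(x^\tau_{h+1})$, $\phi^k_h(x,a)=\int_{\mathcal{S}}\psi(x,a,x')V^k_{h+1}(x')\,dx'$, $\Gamma^k_h=\beta(\phi^{k\top}_h(\Lambda^k_h)^{-1}\phi^k_h)^{1/2}$, $Q^k_h=\min\{r^k_h+\phi^{k\top}_h w^k_h+\Gamma^k_h,H-h+1\}^+$, $V^k_h(x)=\langle Q^k_h(x,\cdot),\pi^k_h(\cdot\,|\,x)\rangle$. Definitions: $\pi^*=\arg\max_{\pi}\sum_{k=1}^K V^{\pi,k}_1(x^k_1)$; model prediction error $\iota^k_h=r^k_h+\mathbb{P}_hV^k_{h+1}-Q^k_h$. Filtration: $\mathcal{F}_{k,h,1}$ is the $\sigma$-algebra generated by $\{(x^\tau_i,a^\tau_i)\}_{(\tau,i)\in[k-1]\times[H]}\cup\{r^\tau\}_{\tau\in[k]}\cup\{(x^k_i,a^k_i)\}_{i\in[h]}$, and $\mathcal{F}_{k,h,2}$ is generated by these together with $x^k_{h+1}$ ($x^k_{H+1}$ a null state). With $(\mathbb{J}_{k,h}f)(x)=\langle f(x,\cdot),\pi^k_h(\cdot\,|\,x)\rangle$, define $D_{k,h,1}=(\mathbb{J}_{k,h}(Q^k_h-Q^{\pi^k,k}_h))(x^k_h)-(Q^k_h-Q^{\pi^k,k}_h)(x^k_h,a^k_h)$, $D_{k,h,2}=(\mathbb{P}_h(V^k_{h+1}-V^{\pi^k,k}_{h+1}))(x^k_h,a^k_h)-(V^k_{h+1}-V^{\pi^k,k}_{h+1})(x^k_{h+1})$,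 and $\mathcal{M}_{k,h,m}=\sum_{(\tau,i,\ell):\,t(\tau,i,\ell)\le t(k,h,m)}D_{\tau,i,\ell}$. *)

theory Defs
  imports "HOL-Probability.Probability"
begin

definition Pop :: "(nat \<Rightarrow> 's \<Rightarrow> 'a \<Rightarrow> 's measure) \<Rightarrow> nat \<Rightarrow> ('s \<Rightarrow> real) \<Rightarrow> 's \<Rightarrow> 'a \<Rightarrow> real" where
  "Pop P h f x a = (\<integral>y. f y \<partial>(P h x a))"

definition Jop :: "(nat \<Rightarrow> 's \<Rightarrow> 'a::finite pmf) \<Rightarrow> nat \<Rightarrow> ('s \<Rightarrow> 'a \<Rightarrow> real) \<Rightarrow> 's \<Rightarrow> real" where
  "Jop pol h f x = (\<Sum>a\<in>UNIV. pmf (pol h x) a * f x a)"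

text \<open>Value of policy pol with reward r, n steps to go (current step H - n + 1).\<close>
primrec Vtg :: "(nat \<Rightarrow> 's \<Rightarrow> 'a::finite \<Rightarrow> 's measure) \<Rightarrow> nat \<Rightarrow> (nat \<Rightarrow> 's \<Rightarrow> 'a \<Rightarrow> real)
    \<Rightarrow> (nat \<Rightarrow> 's \<Rightarrow> 'a pmf) \<Rightarrow> nat \<Rightarrow> 's \<Rightarrow> real" where
  "Vtg P H r pol 0 x = 0"
| "Vtg P H r pol (Suc n) x =
     Jop pol (H - n) (\<lambda>y b. r (H - n) y b + Pop P (H - n) (Vtg P H r pol n) y b) x"

definition Vpi :: "(nat \<Rightarrow> 's \<Rightarrow> 'a::finite \<Rightarrow> 's measure) \<Rightarrow> nat \<Rightarrow> (nat \<Rightarrow> 's \<Rightarrow> 'a \<Rightarrow> real)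
    \<Rightarrow> (nat \<Rightarrow> 's \<Rightarrow> 'a pmf) \<Rightarrow> nat \<Rightarrow> 's \<Rightarrow> real" where
  "Vpi P H r pol h x = Vtg P H r pol (Suc H - h) x"

definition Qpi :: "(nat \<Rightarrow> 's \<Rightarrow> 'a::finite \<Rightarrow> 's measure) \<Rightarrow> nat \<Rightarrow> (nat \<Rightarrow> 's \<Rightarrow> 'a \<Rightarrow> real)
    \<Rightarrow> (nat \<Rightarrow> 's \<Rightarrow> 'a pmf) \<Rightarrow> nat \<Rightarrow> 's \<Rightarrow> 'a \<Rightarrow> real" where
  "Qpi P H r pol h x a = r h x a + Pop P h (Vpi P H r pol (Suc h)) x a"

text \<open>Etg P pol h f n x = E_pol[f(x_h,a_h) | x_{h-n} = x].\<close>
primrec Etg :: "(nat \<Rightarrow> 's \<Rightarrow> 'a::finite \<Rightarrow> 's measure) \<Rightarrow> (nat \<Rightarrow> 's \<Rightarrow> 'a pmf) \<Rightarrow> nat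
    \<Rightarrow> ('s \<Rightarrow> 'a \<Rightarrow> real) \<Rightarrow> nat \<Rightarrow> 's \<Rightarrow> real" where
  "Etg P pol h f 0 x = Jop pol h f x"
| "Etg P pol h f (Suc n) x = Jop pol (h - Suc n) (\<lambda>y b. Pop P (h - Suc n) (Etg P pol h f n) y b) x"

definition Epi :: "(nat \<Rightarrow> 's \<Rightarrow> 'a::finite \<Rightarrow> 's measure) \<Rightarrow> (nat \<Rightarrow> 's \<Rightarrow> 'a pmf) \<Rightarrow> nat
    \<Rightarrow> ('s \<Rightarrow> 'a \<Rightarrow> real) \<Rightarrow> 's \<Rightarrow> real" where
  "Epi P pol h f x = Etg P pol h f (h - 1) x"

definition policies :: "'s measure \<Rightarrow> (nat \<Rightarrow> 's \<Rightarrow> 'a::finite pmf) set" where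
  "policies S = {pol. \<forall>h a. (\<lambda>x. pmf (pol h x) a) \<in> borel_measurable S}"

definition Vest :: "nat \<Rightarrow> (nat \<Rightarrow> 's \<Rightarrow> 'a::finite pmf) \<Rightarrow> (nat \<Rightarrow> 's \<Rightarrow> 'a \<Rightarrow> real) \<Rightarrow> nat \<Rightarrow> 's \<Rightarrow> real" where
  "Vest H pol Q h x = (if h \<le> H then Jop pol h (Q h) x else 0)"

definition iota :: "(nat \<Rightarrow> 's \<Rightarrow> 'a::finite \<Rightarrow> 's measure) \<Rightarrow> nat \<Rightarrow> (nat \<Rightarrow> 's \<Rightarrow> 'a \<Rightarrow> real)
    \<Rightarrow> (nat \<Rightarrow> 's \<Rightarrow> 'a pmf) \<Rightarrow> (nat \<Rightarrow> 's \<Rightarrow> 'a \<Rightarrow> real) \<Rightarrow> nat \<Rightarrow> 's \<Rightarrow> 'a \<Rightarrow> real" where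
  "iota P H r pol Q h x a = r h x a + Pop P h (Vest H pol Q (Suc h)) x a - Q h x a"

text \<open>Random quantities, indexed by episode k and outcome w:
  R k w = r^k, Pol k w = pi^k, Q k w = Q^k, X k h w = x^k_h, A k h w = a^k_h.\<close>

definition D1 :: "(nat \<Rightarrow> 's \<Rightarrow> 'a::finite \<Rightarrow> 's measure) \<Rightarrow> nat
    \<Rightarrow> (nat \<Rightarrow> 'w \<Rightarrow> nat \<Rightarrow> 's \<Rightarrow> 'a \<Rightarrow> real) \<Rightarrow> (nat \<Rightarrow> 'w \<Rightarrow> nat \<Rightarrow> 's \<Rightarrow> 'a pmf)
    \<Rightarrow> (nat \<Rightarrow> 'w \<Rightarrow> nat \<Rightarrow> 's \<Rightarrow> 'a \<Rightarrow> real) \<Rightarrow> (nat \<Rightarrow> nat \<Rightarrow> 'w \<Rightarrow> 's) \<Rightarrow> (nat \<Rightarrow> nat \<Rightarrow> 'w \<Rightarrow> 'a)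
    \<Rightarrow> nat \<Rightarrow> nat \<Rightarrow> 'w \<Rightarrow> real" where
  "D1 P H R Pol Q X A k h w =
     (let f = (\<lambda>y b. Q k w h y b - Qpi P H (R k w) (Pol k w) h y b)
      in Jop (Pol k w) h f (X k h w) - f (X k h w) (A k h w))"

definition D2 :: "(nat \<Rightarrow> 's \<Rightarrow> 'a::finite \<Rightarrow> 's measure) \<Rightarrow> nat
    \<Rightarrow> (nat \<Rightarrow> 'w \<Rightarrow> nat \<Rightarrow> 's \<Rightarrow> 'a \<Rightarrow> real) \<Rightarrow> (nat \<Rightarrow> 'w \<Rightarrow> nat \<Rightarrow> 's \<Rightarrow> 'a pmf)
    \<Rightarrow> (nat \<Rightarrow> 'w \<Rightarrow> nat \<Rightarrow> 's \<Rightarrow> 'a \<Rightarrow> real) \<Rightarrow> (nat \<Rightarrow> nat \<Rightarrow> 'w \<Rightarrow> 's) \<Rightarrow> (nat \<Rightarrow> nat \<Rightarrow> 'w \<Rightarrow> 'a)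
    \<Rightarrow> nat \<Rightarrow> nat \<Rightarrow> 'w \<Rightarrow> real" where
  "D2 P H R Pol Q X A k h w =
     (let g = (\<lambda>y. Vest H (Pol k w) (Q k w) (Suc h) y - Vpi P H (R k w) (Pol k w) (Suc h) y)
      in Pop P h g (X k h w) (A k h w) - g (X k (Suc h) w))"

definition Dterm where
  "Dterm P H R Pol Q X A k h m w =
     (if m = (1::nat) then D1 P H R Pol Q X A k h w else D2 P H R Pol Q X A k h w)"

definition tidx :: "nat \<Rightarrow> nat \<Rightarrow> nat \<Rightarrow> nat \<Rightarrow> nat" where
  "tidx H k h m = (k - 1) * (2 * H) + (h - 1) * 2 + m"

definition Mart where
  "Mart P H K R Pol Q X A t w =
     (\<Sum>(k, h, m)\<in>{z \<in> {1..K} \<times> {1..H} \<times> {1..2::nat}. case z of (k, h, m) \<Rightarrow> tidx H k h m \<le> t}.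
        Dterm P H R Pol Q X A k h m w)"

text \<open>F_{k,h,m}: sigma-algebra generated by episodes 1..k-1, rewards r^1..r^k,
  (x^k_i,a^k_i) for i \<le> h, and x^k_{h+1} if m = 2 (x^k_{H+1} is a null state).\<close>
definition Fgen :: "'w measure \<Rightarrow> 's measure \<Rightarrow> nat \<Rightarrow> (nat \<Rightarrow> 'w \<Rightarrow> nat \<Rightarrow> 's \<Rightarrow> 'a \<Rightarrow> real)
    \<Rightarrow> (nat \<Rightarrow> nat \<Rightarrow> 'w \<Rightarrow> 's) \<Rightarrow> (nat \<Rightarrow> nat \<Rightarrow> 'w \<Rightarrow> 'a) \<Rightarrow> nat \<Rightarrow> nat \<Rightarrow> nat \<Rightarrow> 'w measure" where
  "Fgen M S H R X A k h m = sigma (space M)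
     ({X \<tau> i -` B \<inter> space M | \<tau> i B. \<tau> \<in> {1..<k} \<and> i \<in> {1..H} \<and> B \<in> sets S}
    \<union> {A \<tau> i -` B \<inter> space M | \<tau> i B. \<tau> \<in> {1..<k} \<and> i \<in> {1..H}}
    \<union> {(\<lambda>w. R \<tau> w i x a) -` B \<inter> space M | \<tau> i x a B.
          \<tau> \<in> {1..k} \<and> i \<in> {1..H} \<and> x \<in> space S \<and> B \<in> sets borel}
    \<union> {X k i -` B \<inter> space M | i B. i \<in> {1..h} \<and> B \<in> sets S}
    \<union> {A k i -` B \<inter> space M | i B. i \<in> {1..h}}
    \<union> {X k (Suc h) -` B \<inter> space M | B. m = 2 \<and> h < H \<and> B \<in> sets S})"

text \<open>Filtration indexed by the timestep t = t(k,h,m).\<close>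
definition Ft where
  "Ft M S H R X A t =
     Fgen M S H R X A ((t - 1) div (2 * H) + 1) (((t - 1) mod (2 * H)) div 2 + 1) ((t - 1) mod 2 + 1)"

definition is_martingale :: "'w measure \<Rightarrow> (nat \<Rightarrow> 'w measure) \<Rightarrow> (nat \<Rightarrow> 'w \<Rightarrow> real) \<Rightarrow> nat \<Rightarrow> bool" where
  "is_martingale M F Y T \<longleftrightarrow>
     (\<forall>t\<in>{1..T}. subalgebra M (F t) \<and> Y t \<in> borel_measurable (F t) \<and> integrable M (Y t)) \<and>
     (\<forall>t\<in>{1..<T}. sets (F t) \<subseteq> sets (F (Suc t))) \<and>
     (\<forall>t\<in>{1..<T}. AE w in M. real_cond_exp M (F t) (Y (Suc t)) w = Y t w)"

definition Regret where
  "Regret S P H K R Pol X w =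
     (SUP pol\<in>policies S. \<Sum>k=1..K. Vpi P H (R k w) pol 1 (X k 1 w))
     - (\<Sum>k=1..K. Vpi P H (R k w) (Pol k w) 1 (X k 1 w))"

end

theory Submission
  imports Defs
begin
lemma integral_kernel_meas2:
  fixes f :: "'x \<Rightarrow> 'y \<Rightarrow> real"
  assumes f: "(\<lambda>(x,y). f x y) \<in> borel_measurable (M \<Otimes>\<^sub>M N)"
    and L: "L \<in> M \<rightarrow>\<^sub>M subprob_algebra N"
    and bnd: "\<And>x y. x \<in> space M \<Longrightarrow> y \<in> space N \<Longrightarrow> \<bar>f x y\<bar> \<le> B"
  shows "(\<lambda>x. \<integral>y. f x y \<partial>L x) \<in> borel_measurable M"
proof -
  have int: "integrable (L x) (f x)" if x: "x \<in> space M" for x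
  proof -
    have sp: "subprob_space (L x)" "sets (L x) = sets N"
      using measurable_space[OF L x] by (auto simp: space_subprob_algebra)
    interpret subprob_space "L x" by (rule sp(1))
    have "f x \<in> borel_measurable N" using measurable_Pair2[OF f x] by simp
    then have "f x \<in> borel_measurable (L x)" using sp(2) measurable_cong_sets by blast
    then show ?thesis
      by (intro integrable_const_bound[where B=B]) (auto intro!: AE_I2 simp: bnd subprob_measurableD(1)[OF L x] x)
  qed
  have 1: "(\<lambda>x. \<integral>\<^sup>+y. ennreal (f x y) \<partial>L x) \<in> borel_measurable M"
    by (rule nn_integral_measurable_subprob_algebra2[OF _ L]) (use f in measurable)
  have 2: "(\<lambda>x. \<integral>\<^sup>+y. ennreal (- f x y) \<partial>L x) \<in> borel_measurable M"
    by (rule nn_integral_measurable_subprob_algebra2[OF _ L]) (use f in measurable)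
  have "(\<lambda>x. enn2real (\<integral>\<^sup>+y. ennreal (f x y) \<partial>L x) - enn2real (\<integral>\<^sup>+y. ennreal (- f x y) \<partial>L x))
        \<in> borel_measurable M" using 1 2 by measurable
  then show ?thesis
    by (rule measurable_cong[THEN iffD1, rotated]) (simp add: real_lebesgue_integral_def[OF int])
qed

definition bmb :: "'s measure \<Rightarrow> ('s \<Rightarrow> real) \<Rightarrow> bool" where
  "bmb S f \<longleftrightarrow> f \<in> borel_measurable S \<and> (\<exists>B. \<forall>x\<in>space S. \<bar>f x\<bar> \<le> B)"

lemma Jop_meas:
  assumes "\<And>b. (\<lambda>x. pmf (pol h x) b) \<in> borel_measurable S" "\<And>b. (\<lambda>x. f x b) \<in> borel_measurable S"
  shows "(\<lambda>x. Jop pol h f x) \<in> borel_measurable S"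
  unfolding Jop_def using assms by measurable

lemma Jop_bnd:
  assumes "\<And>b. \<bar>f x b\<bar> \<le> B"
  shows "\<bar>Jop pol h f x\<bar> \<le> B"
proof -
  have "\<bar>Jop pol h f x\<bar> \<le> (\<Sum>b\<in>UNIV. pmf (pol h x) b * B)"
    unfolding Jop_def
    by (rule order_trans[OF sum_abs]) (intro sum_mono, auto simp: abs_mult intro!: mult_left_mono assms)
  also have "\<dots> = B" by (simp add: sum_distrib_right[symmetric] sum_pmf_eq_1)
  finally show ?thesis .
qed

lemma Jop_const: "Jop pol h (\<lambda>y b. c y) x = c x"
  unfolding Jop_def by (simp add: sum_distrib_right[symmetric] sum_pmf_eq_1)

lemma Jop_add: "Jop pol h (\<lambda>y b. f y b + g y b) x = Jop pol h f x + Jop pol h g x"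
  unfolding Jop_def by (simp add: distrib_left sum.distrib)

lemma Jop_diff: "Jop pol h (\<lambda>y b. f y b - g y b) x = Jop pol h f x - Jop pol h g x"
  unfolding Jop_def by (simp add: right_diff_distrib sum_subtractf)

lemma Jop_sum: "Jop pol h (\<lambda>y b. \<Sum>i\<in>I. f i y b) x = (\<Sum>i\<in>I. Jop pol h (f i) x)"
  unfolding Jop_def by (simp add: sum_distrib_left sum.swap[of _ I])

lemma Jop_cong: "(\<And>b. f x b = g x b) \<Longrightarrow> Jop pol h f x = Jop pol h g x"
  unfolding Jop_def by simp

locale mdp =
  fixes S :: "'s measure" and P :: "nat \<Rightarrow> 's \<Rightarrow> 'a::finite \<Rightarrow> 's measure" and H :: nat
  assumes kp: "\<And>h x a. h \<in> {1..H} \<Longrightarrow> x \<in> space S \<Longrightarrow> prob_space (P h x a)"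
    and km: "\<And>h a. h \<in> {1..H} \<Longrightarrow> (\<lambda>x. P h x a) \<in> S \<rightarrow>\<^sub>M subprob_algebra S"
begin

lemma P_sets:
  assumes "h \<in> {1..H}" "x \<in> space S"
  shows "sets (P h x a) = sets S" "space (P h x a) = space S"
  using subprob_measurableD[OF km[OF assms(1)] assms(2)] by auto

lemma Pop_int:
  assumes h: "h \<in> {1..H}" and x: "x \<in> space S" and f: "bmb S f"
  shows "integrable (P h x a) f"
proof -
  interpret prob_space "P h x a" using kp[OF h x] .
  obtain B where B: "\<forall>y\<in>space S. \<bar>f y\<bar> \<le> B" using f unfolding bmb_def by auto
  have "f \<in> borel_measurable (P h x a)"
    using f P_sets[OF h x] measurable_cong_sets unfolding bmb_def by blast
  then show ?thesis
    by (intro integrable_const_bound[where B=B]) (auto simp: B P_sets[OF h x])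
qed

lemma Pop_bnd:
  assumes h: "h \<in> {1..H}" and x: "x \<in> space S" and f: "f \<in> borel_measurable S"
    and B: "\<And>y. y \<in> space S \<Longrightarrow> \<bar>f y\<bar> \<le> B"
  shows "\<bar>Pop P h f x a\<bar> \<le> B"
proof -
  interpret prob_space "P h x a" using kp[OF h x] .
  have bf: "bmb S f" unfolding bmb_def using f B by auto
  have "\<bar>Pop P h f x a\<bar> \<le> (\<integral>y. \<bar>f y\<bar> \<partial>P h x a)"
    unfolding Pop_def by (rule integral_abs_bound)
  also have "\<dots> \<le> B"
    using Pop_int[OF h x bf] B
    by (intro integral_le_const) (auto simp: P_sets[OF h x])
  finally show ?thesis .
qed

lemma Pop_meas:
  assumes h: "h \<in> {1..H}" and f: "f \<in> borel_measurable S"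
  shows "(\<lambda>x. Pop P h f x a) \<in> borel_measurable S"
  unfolding Pop_def
  by (rule measurable_compose[OF km[OF h] integral_measurable_subprob_algebra[OF f]])

lemma Pop_bmb:
  assumes h: "h \<in> {1..H}" and f: "bmb S f"
  shows "bmb S (\<lambda>x. Pop P h f x a)"
proof -
  obtain B where B: "\<forall>y\<in>space S. \<bar>f y\<bar> \<le> B" and fm: "f \<in> borel_measurable S"
    using f unfolding bmb_def by auto
  show ?thesis unfolding bmb_def
    using Pop_meas[OF h fm] Pop_bnd[OF h _ fm] B by blast
qed

lemma Pop_cong:
  assumes h: "h \<in> {1..H}" and x: "x \<in> space S" and eq: "\<And>y. y \<in> space S \<Longrightarrow> f y = g y"
  shows "Pop P h f x a = Pop P h g x a"
  unfolding Pop_def by (rule Bochner_Integration.integral_cong) (auto simp: P_sets[OF h x] eq)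

lemma Pop_add:
  assumes h: "h \<in> {1..H}" and x: "x \<in> space S" and f: "bmb S f" and g: "bmb S g"
  shows "Pop P h (\<lambda>y. f y + g y) x a = Pop P h f x a + Pop P h g x a"
  unfolding Pop_def using Pop_int[OF h x f] Pop_int[OF h x g] by simp

lemma Pop_diff:
  assumes h: "h \<in> {1..H}" and x: "x \<in> space S" and f: "bmb S f" and g: "bmb S g"
  shows "Pop P h (\<lambda>y. f y - g y) x a = Pop P h f x a - Pop P h g x a"
  unfolding Pop_def using Pop_int[OF h x f] Pop_int[OF h x g] by simp

lemma Pop_sum:
  assumes h: "h \<in> {1..H}" and x: "x \<in> space S" and f: "\<And>i. i \<in> I \<Longrightarrow> bmb S (f i)"
  shows "Pop P h (\<lambda>y. \<Sum>i\<in>I. f i y) x a = (\<Sum>i\<in>I. Pop P h (f i) x a)"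
  unfolding Pop_def using Pop_int[OF h x f] by (simp add: Bochner_Integration.integral_sum)

lemma Pop_joint:
  assumes h: "h \<in> {1..H}" and f: "(\<lambda>(w,y). f w y) \<in> borel_measurable (G \<Otimes>\<^sub>M S)"
    and B: "\<And>w y. w \<in> space G \<Longrightarrow> y \<in> space S \<Longrightarrow> \<bar>f w y\<bar> \<le> B"
  shows "(\<lambda>(w,x). Pop P h (f w) x a) \<in> borel_measurable (G \<Otimes>\<^sub>M S)"
proof -
  have L: "(\<lambda>z. P h (snd z) a) \<in> (G \<Otimes>\<^sub>M S) \<rightarrow>\<^sub>M subprob_algebra S"
    by (rule measurable_compose[OF measurable_snd km[OF h]])
  have f2: "(\<lambda>(z, y). f (fst z) y) \<in> borel_measurable ((G \<Otimes>\<^sub>M S) \<Otimes>\<^sub>M S)"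
  proof -
    have "(\<lambda>zy. (fst (fst zy), snd zy)) \<in> (G \<Otimes>\<^sub>M S) \<Otimes>\<^sub>M S \<rightarrow>\<^sub>M G \<Otimes>\<^sub>M S" by measurable
    from measurable_compose[OF this f] show ?thesis by (simp add: case_prod_beta')
  qed
  have "(\<lambda>z. \<integral>y. f (fst z) y \<partial>P h (snd z) a) \<in> borel_measurable (G \<Otimes>\<^sub>M S)"
    by (rule integral_kernel_meas2[OF f2 L, where B=B]) (auto simp: B space_pair_measure)
  then show ?thesis unfolding Pop_def by (simp add: case_prod_beta')
qed

end

definition bmb2 :: "'s measure \<Rightarrow> ('s \<Rightarrow> 'a \<Rightarrow> real) \<Rightarrow> bool" where
  "bmb2 S F \<longleftrightarrow> (\<forall>b. (\<lambda>y. F y b) \<in> borel_measurable S) \<and> (\<exists>B. \<forall>y\<in>space S. \<forall>b. \<bar>F y b\<bar> \<le> B)"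

lemma bmb_add: "bmb S f \<Longrightarrow> bmb S g \<Longrightarrow> bmb S (\<lambda>y. f y + g y)"
  unfolding bmb_def
  by (elim conjE exE, intro conjI exI[of _ "_ + _"] borel_measurable_add ballI, assumption+)
     (rule order_trans[OF abs_triangle_ineq add_mono]; auto)

lemma bmb_diff: "bmb S f \<Longrightarrow> bmb S g \<Longrightarrow> bmb S (\<lambda>y. f y - g y)"
  unfolding bmb_def
  by (elim conjE exE, intro conjI exI[of _ "_ + _"] borel_measurable_diff ballI, assumption+)
     (rule order_trans[OF abs_triangle_ineq4 add_mono]; auto)

lemma bmb_zero: "bmb S (\<lambda>y. 0)"
  unfolding bmb_def by auto

lemma bmb2_add: "bmb2 S F \<Longrightarrow> bmb2 S G \<Longrightarrow> bmb2 S (\<lambda>y b. F y b + G y b)"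
  unfolding bmb2_def
  by (elim conjE exE, intro conjI exI[of _ "_ + _"] allI borel_measurable_add ballI, blast+)
     (rule order_trans[OF abs_triangle_ineq add_mono]; auto)

lemma bmb2_diff: "bmb2 S F \<Longrightarrow> bmb2 S G \<Longrightarrow> bmb2 S (\<lambda>y b. F y b - G y b)"
  unfolding bmb2_def
  by (elim conjE exE, intro conjI exI[of _ "_ + _"] allI borel_measurable_diff ballI, blast+)
     (rule order_trans[OF abs_triangle_ineq4 add_mono]; auto)

lemma bmb2_mult: "bmb2 S F \<Longrightarrow> bmb2 S G \<Longrightarrow> bmb2 S (\<lambda>y b. F y b * G y b)"
  unfolding bmb2_def
proof (elim conjE exE, intro conjI exI[of _ "_ * _"] allI borel_measurable_times ballI)
  fix B1 B2 y b
  assume b1: "\<forall>y\<in>space S. \<forall>b. \<bar>F y b\<bar> \<le> B1" and b2: "\<forall>y\<in>space S. \<forall>b. \<bar>G y b\<bar> \<le> B2"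
    and y: "y \<in> space S"
  have "\<bar>F y b * G y b\<bar> = \<bar>F y b\<bar> * \<bar>G y b\<bar>" by (simp add: abs_mult)
  also have "\<dots> \<le> B1 * B2"
    using b1 b2 y by (intro mult_mono) (auto intro: order_trans[OF abs_ge_zero])
  finally show "\<bar>F y b * G y b\<bar> \<le> B1 * B2" .
qed auto

lemma bmb2_sum:
  assumes "\<And>i. i \<in> I \<Longrightarrow> bmb2 S (F i)"
  shows "bmb2 S (\<lambda>y b. \<Sum>i\<in>I. F i y b)"
proof -
  from assms have "\<forall>i\<in>I. \<exists>B. \<forall>y\<in>space S. \<forall>b. \<bar>F i y b\<bar> \<le> B" unfolding bmb2_def by auto
  then obtain Bf where Bf: "\<And>i y b. i \<in> I \<Longrightarrow> y \<in> space S \<Longrightarrow> \<bar>F i y b\<bar> \<le> Bf i"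
    by metis
  have m: "(\<lambda>y. \<Sum>i\<in>I. F i y b) \<in> borel_measurable S" for b
    using assms unfolding bmb2_def by (intro borel_measurable_sum) auto
  have "\<bar>\<Sum>i\<in>I. F i y b\<bar> \<le> (\<Sum>i\<in>I. Bf i)" if "y \<in> space S" for y b
    by (rule order_trans[OF sum_abs sum_mono]) (use Bf that in auto)
  then show ?thesis unfolding bmb2_def using m by blast
qed

lemma bmb2_const: "bmb S f \<Longrightarrow> bmb2 S (\<lambda>y b. f y)"
  unfolding bmb_def bmb2_def by auto

lemma bmb2_bmb: "bmb2 S F \<Longrightarrow> bmb S (\<lambda>y. F y b)"
  unfolding bmb_def bmb2_def by auto

lemma bmb_pmf: "(\<lambda>y. pmf (pol h y) c) \<in> borel_measurable S \<Longrightarrow> bmb S (\<lambda>y. pmf (pol h y) c)"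
  unfolding bmb_def by (auto intro!: exI[of _ 1] pmf_le_1)

lemma bmb2_pmf:
  assumes "\<And>b. (\<lambda>y. pmf (pol h y) b) \<in> borel_measurable S"
  shows "bmb2 S (\<lambda>y b. pmf (pol h y) b)"
  unfolding bmb2_def using assms by (auto intro!: exI[of _ 1] pmf_le_1)

lemma bmb_Jop:
  assumes "\<And>b. (\<lambda>y. pmf (pol h y) b) \<in> borel_measurable S" "bmb2 S F"
  shows "bmb S (Jop pol h F)"
proof -
  obtain B where B: "\<forall>y\<in>space S. \<forall>b. \<bar>F y b\<bar> \<le> B" using assms(2) unfolding bmb2_def by auto
  have "(\<lambda>x. Jop pol h F x) \<in> borel_measurable S"
    by (rule Jop_meas) (use assms in \<open>auto simp: bmb2_def\<close>)
  moreover have "\<forall>x\<in>space S. \<bar>Jop pol h F x\<bar> \<le> B" using B by (auto intro!: Jop_bnd)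
  ultimately show ?thesis unfolding bmb_def by auto
qed

definition fadv :: "(nat \<Rightarrow> 's \<Rightarrow> 'a::finite pmf) \<Rightarrow> (nat \<Rightarrow> 's \<Rightarrow> 'a pmf) \<Rightarrow> (nat \<Rightarrow> 's \<Rightarrow> 'a \<Rightarrow> real)
    \<Rightarrow> nat \<Rightarrow> 's \<Rightarrow> 'a \<Rightarrow> real" where
  "fadv ps pk Qk h y b = (\<Sum>c\<in>UNIV. (pmf (ps h y) c - pmf (pk h y) c) * Qk h y c)"

context mdp
begin

lemma bmb2_Pop: "h \<in> {1..H} \<Longrightarrow> bmb S f \<Longrightarrow> bmb2 S (\<lambda>y b. Pop P h f y b)"
  unfolding bmb2_def using Pop_meas Pop_bnd unfolding bmb_def by metis

lemma Vtg_joint: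
  fixes r :: "'w \<Rightarrow> nat \<Rightarrow> 's \<Rightarrow> 'a \<Rightarrow> real" and pol :: "'w \<Rightarrow> nat \<Rightarrow> 's \<Rightarrow> 'a pmf"
  assumes r: "\<And>h a. h \<in> {1..H} \<Longrightarrow> (\<lambda>(w,x). r w h x a) \<in> borel_measurable (G \<Otimes>\<^sub>M S)"
    and rb: "\<And>h a w x. h \<in> {1..H} \<Longrightarrow> w \<in> space G \<Longrightarrow> x \<in> space S \<Longrightarrow> \<bar>r w h x a\<bar> \<le> 1"
    and pol: "\<And>h a. h \<in> {1..H} \<Longrightarrow> (\<lambda>(w,x). pmf (pol w h x) a) \<in> borel_measurable (G \<Otimes>\<^sub>M S)"
  shows "n \<le> H \<Longrightarrow> (\<lambda>(w,x). Vtg P H (r w) (pol w) n x) \<in> borel_measurable (G \<Otimes>\<^sub>M S) \<and>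
           (\<forall>w\<in>space G. \<forall>x\<in>space S. \<bar>Vtg P H (r w) (pol w) n x\<bar> \<le> real n)"
proof (induction n)
  case 0
  show ?case by simp
next
  case (Suc n)
  then have IH1: "(\<lambda>(w,x). Vtg P H (r w) (pol w) n x) \<in> borel_measurable (G \<Otimes>\<^sub>M S)"
    and IH2: "\<And>w x. w \<in> space G \<Longrightarrow> x \<in> space S \<Longrightarrow> \<bar>Vtg P H (r w) (pol w) n x\<bar> \<le> real n"
    by auto
  have h: "H - n \<in> {1..H}" using Suc.prems by auto
  have pj: "(\<lambda>(w,x). Pop P (H-n) (Vtg P H (r w) (pol w) n) x b) \<in> borel_measurable (G \<Otimes>\<^sub>M S)" for b
    by (rule Pop_joint[OF h IH1, where B = "real n"]) (use IH2 in auto)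
  have "(\<lambda>z. \<Sum>b\<in>UNIV. pmf (pol (fst z) (H-n) (snd z)) b *
          (r (fst z) (H-n) (snd z) b + Pop P (H-n) (Vtg P H (r (fst z)) (pol (fst z)) n) (snd z) b))
        \<in> borel_measurable (G \<Otimes>\<^sub>M S)"
    using pol[OF h] r[OF h] pj unfolding case_prod_beta'
    by (intro borel_measurable_sum borel_measurable_times borel_measurable_add) auto
  then have m: "(\<lambda>(w,x). Vtg P H (r w) (pol w) (Suc n) x) \<in> borel_measurable (G \<Otimes>\<^sub>M S)"
    by (simp add: Jop_def case_prod_beta')
  have "\<bar>Vtg P H (r w) (pol w) (Suc n) x\<bar> \<le> real (Suc n)" if w: "w \<in> space G" and x: "x \<in> space S" for w x
  proof -
    have sm: "Vtg P H (r w) (pol w) n \<in> borel_measurable S"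
      using measurable_Pair2[OF IH1 w] by simp
    show ?thesis
      unfolding Vtg.simps
    proof (rule Jop_bnd)
      fix b
      have "\<bar>r w (H - n) x b + Pop P (H - n) (Vtg P H (r w) (pol w) n) x b\<bar> \<le> 1 + real n"
        by (rule order_trans[OF abs_triangle_ineq add_mono])
           (auto intro!: rb[OF h w x] Pop_bnd[OF h x sm] IH2[OF w])
      then show "\<bar>r w (H - n) x b + Pop P (H - n) (Vtg P H (r w) (pol w) n) x b\<bar> \<le> real (Suc n)"
        by simp
    qed
  qed
  with m show ?case by auto
qed

lemma Vtg_sect:
  assumes r: "\<And>h a. h \<in> {1..H} \<Longrightarrow> (\<lambda>x. r h x a) \<in> borel_measurable S"
    and rb: "\<And>h a x. h \<in> {1..H} \<Longrightarrow> x \<in> space S \<Longrightarrow> \<bar>r h x a\<bar> \<le> 1"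
    and pol: "\<And>h a. h \<in> {1..H} \<Longrightarrow> (\<lambda>x. pmf (pol h x) a) \<in> borel_measurable S"
    and n: "n \<le> H"
  shows "bmb S (Vtg P H r pol n)"
proof -
  let ?G = "count_space (UNIV :: unit set)"
  have "(\<lambda>(w,x). Vtg P H ((\<lambda>_. r) w) ((\<lambda>_. pol) w) n x) \<in> borel_measurable (?G \<Otimes>\<^sub>M S) \<and>
           (\<forall>w\<in>space ?G. \<forall>x\<in>space S. \<bar>Vtg P H ((\<lambda>_. r) w) ((\<lambda>_. pol) w) n x\<bar> \<le> real n)"
  proof (rule Vtg_joint[OF _ _ _ n])
    show "(\<lambda>(w, x). r h x a) \<in> borel_measurable (?G \<Otimes>\<^sub>M S)" if "h \<in> {1..H}" for h a
      using measurable_compose[OF measurable_snd r[OF that]] by (simp add: case_prod_beta')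
    show "(\<lambda>(w, x). pmf (pol h x) a) \<in> borel_measurable (?G \<Otimes>\<^sub>M S)" if "h \<in> {1..H}" for h a
      using measurable_compose[OF measurable_snd pol[OF that]] by (simp add: case_prod_beta')
  qed (use rb in auto)
  then have "Vtg P H r pol n \<in> borel_measurable S" "\<forall>x\<in>space S. \<bar>Vtg P H r pol n x\<bar> \<le> real n"
    using measurable_Pair2[of _ ?G S borel "()"] by auto
  then show ?thesis unfolding bmb_def by auto
qed

lemma Vpi_step:
  assumes "j \<in> {1..H}"
  shows "Vpi P H r pol j x = Jop pol j (\<lambda>y b. r j y b + Pop P j (Vpi P H r pol (Suc j)) y b) x"
proof -
  have e: "Suc H - j = Suc (H - j)" "H - (H - j) = j" "Suc H - Suc j = H - j" using assms by auto
  show ?thesis unfolding Vpi_def e(1) Vtg.simps e(2) e(3) ..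
qed

lemma Vpi_step_Q:
  assumes "j \<in> {1..H}"
  shows "Vpi P H r pol j x = Jop pol j (Qpi P H r pol j) x"
  unfolding Vpi_step[OF assms] Qpi_def ..

lemma Vpi_SucH: "Vpi P H r pol (Suc H) x = 0"
  by (simp add: Vpi_def)

lemma Vest_SucH: "Vest H pol Q (Suc H) x = 0"
  by (simp add: Vest_def)

end

context mdp
begin

lemma policies_pmf: "ps \<in> policies S \<Longrightarrow> (\<lambda>x. pmf (ps h x) b) \<in> borel_measurable S"
  unfolding policies_def by auto

lemma Etg_bmb:
  assumes ps: "ps \<in> policies S" and F: "bmb2 S F"
  shows "n < h \<Longrightarrow> h \<le> H \<Longrightarrow> bmb S (Etg P ps h F n)"
proof (induction n)
  case 0
  have "Etg P ps h F 0 = Jop ps h F" by (rule ext) simp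
  then show ?case using bmb_Jop[OF policies_pmf[OF ps] F] by simp
next
  case (Suc n)
  have hh: "h - Suc n \<in> {1..H}" using Suc.prems by auto
  have "Etg P ps h F (Suc n) = Jop ps (h - Suc n) (\<lambda>y b. Pop P (h - Suc n) (Etg P ps h F n) y b)"
    by (rule ext) simp
  then show ?case
    using bmb_Jop[OF policies_pmf[OF ps] bmb2_Pop[OF hh Suc.IH]] Suc.prems by simp
qed

lemma Etg_add:
  assumes ps: "ps \<in> policies S" and F: "bmb2 S F" and G: "bmb2 S G"
  shows "n < h \<Longrightarrow> h \<le> H \<Longrightarrow> x \<in> space S \<Longrightarrow>
    Etg P ps h (\<lambda>y b. F y b + G y b) n x = Etg P ps h F n x + Etg P ps h G n x"
proof (induction n arbitrary: x)
  case 0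
  then show ?case by (simp add: Jop_add)
next
  case (Suc n)
  have hh: "h - Suc n \<in> {1..H}" using Suc.prems by auto
  have "Pop P (h - Suc n) (Etg P ps h (\<lambda>y b. F y b + G y b) n) x b
      = Pop P (h - Suc n) (Etg P ps h F n) x b + Pop P (h - Suc n) (Etg P ps h G n) x b" for b
  proof -
    have "Pop P (h - Suc n) (Etg P ps h (\<lambda>y b. F y b + G y b) n) x b
        = Pop P (h - Suc n) (\<lambda>y. Etg P ps h F n y + Etg P ps h G n y) x b"
      by (rule Pop_cong[OF hh Suc.prems(3)]) (use Suc.IH Suc.prems in auto)
    also have "\<dots> = Pop P (h - Suc n) (Etg P ps h F n) x b + Pop P (h - Suc n) (Etg P ps h G n) x b"
      by (rule Pop_add[OF hh Suc.prems(3)]) (use Etg_bmb[OF ps F] Etg_bmb[OF ps G] Suc.prems in auto)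
    finally show ?thesis .
  qed
  then show ?case by (simp add: Jop_def distrib_left sum.distrib)
qed

lemma Vest_bmb:
  assumes pkm: "\<And>h b. h \<in> {1..H} \<Longrightarrow> (\<lambda>x. pmf (pk h x) b) \<in> borel_measurable S"
    and Q: "\<And>h. h \<in> {1..H} \<Longrightarrow> bmb2 S (Qk h)" and j: "1 \<le> j"
  shows "bmb S (Vest H pk Qk j)"
proof (cases "j \<le> H")
  case True
  have "Vest H pk Qk j = Jop pk j (Qk j)" by (rule ext) (simp add: Vest_def True)
  then show ?thesis using bmb_Jop[OF pkm Q] True j by auto
next
  case False
  have "Vest H pk Qk j = (\<lambda>_. 0)" by (rule ext) (simp add: Vest_def False)
  then show ?thesis by (simp add: bmb_zero)
qed

lemma Vpi_bmb:
  assumes rm: "\<And>h b. h \<in> {1..H} \<Longrightarrow> (\<lambda>x. r h x b) \<in> borel_measurable S"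
    and rb: "\<And>h b x. h \<in> {1..H} \<Longrightarrow> x \<in> space S \<Longrightarrow> \<bar>r h x b\<bar> \<le> 1"
    and pm: "\<And>h b. h \<in> {1..H} \<Longrightarrow> (\<lambda>x. pmf (pol h x) b) \<in> borel_measurable S"
    and j: "1 \<le> j"
  shows "bmb S (Vpi P H r pol j)"
proof -
  have "Vpi P H r pol j = Vtg P H r pol (Suc H - j)" by (rule ext) (simp add: Vpi_def)
  then show ?thesis using Vtg_sect[OF rm rb pm, where n="Suc H - j"] j by auto
qed

lemma iota_bmb2:
  assumes pkm: "\<And>h b. h \<in> {1..H} \<Longrightarrow> (\<lambda>x. pmf (pk h x) b) \<in> borel_measurable S"
    and r: "\<And>h. h \<in> {1..H} \<Longrightarrow> bmb2 S (r h)"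
    and Q: "\<And>h. h \<in> {1..H} \<Longrightarrow> bmb2 S (Qk h)" and h: "h \<in> {1..H}"
  shows "bmb2 S (iota P H r pk Qk h)"
proof -
  have "iota P H r pk Qk h = (\<lambda>y b. (r h y b + Pop P h (Vest H pk Qk (Suc h)) y b) - Qk h y b)"
    by (intro ext) (simp add: iota_def)
  then show ?thesis
    using bmb2_diff[OF bmb2_add[OF r[OF h] bmb2_Pop[OF h Vest_bmb[OF pkm Q]]] Q[OF h]] by simp
qed

lemma fadv_bmb2:
  assumes ps: "ps \<in> policies S"
    and pkm: "\<And>h b. h \<in> {1..H} \<Longrightarrow> (\<lambda>x. pmf (pk h x) b) \<in> borel_measurable S"
    and Q: "\<And>h. h \<in> {1..H} \<Longrightarrow> bmb2 S (Qk h)" and h: "h \<in> {1..H}"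
  shows "bmb2 S (fadv ps pk Qk h)"
proof -
  have "fadv ps pk Qk h = (\<lambda>y b. \<Sum>c\<in>UNIV. (pmf (ps h y) c - pmf (pk h y) c) * Qk h y c)"
    by (intro ext) (simp add: fadv_def)
  moreover have "bmb2 S (\<lambda>y b. \<Sum>c\<in>UNIV. (pmf (ps h y) c - pmf (pk h y) c) * Qk h y c)"
    by (intro bmb2_sum bmb2_mult bmb2_diff bmb2_const bmb_pmf policies_pmf[OF ps] pkm[OF h]
        bmb2_bmb[OF Q[OF h]])
  ultimately show ?thesis by simp
qed

lemma ident1_gen:
  assumes ps: "ps \<in> policies S"
    and pkm: "\<And>h b. h \<in> {1..H} \<Longrightarrow> (\<lambda>x. pmf (pk h x) b) \<in> borel_measurable S"
    and rm: "\<And>h b. h \<in> {1..H} \<Longrightarrow> (\<lambda>x. r h x b) \<in> borel_measurable S"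
    and rb: "\<And>h b x. h \<in> {1..H} \<Longrightarrow> x \<in> space S \<Longrightarrow> \<bar>r h x b\<bar> \<le> 1"
    and Q: "\<And>h. h \<in> {1..H} \<Longrightarrow> bmb2 S (Qk h)"
    and j: "1 \<le> j" "j \<le> Suc H"
  shows "\<forall>x\<in>space S. Vpi P H r ps j x - Vest H pk Qk j x =
    (\<Sum>h=j..H. Etg P ps h (\<lambda>y b. fadv ps pk Qk h y b + iota P H r pk Qk h y b) (h - j) x)"
  using j(2) j(1)
proof (induction j rule: inc_induct)
  case base
  show ?case by (simp add: Vpi_SucH Vest_SucH)
next
  case (step n)
  have n: "n \<in> {1..H}" using step by auto
  have r2: "bmb2 S (r h)" if "h \<in> {1..H}" for h
    unfolding bmb2_def using rm[OF that] rb[OF that] by blast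
  define Gh where "Gh h = (\<lambda>y b. fadv ps pk Qk h y b + iota P H r pk Qk h y b)" for h
  have Gh: "bmb2 S (Gh h)" if "h \<in> {1..H}" for h
    unfolding Gh_def by (intro bmb2_add fadv_bmb2[OF ps pkm Q that] iota_bmb2[OF pkm r2 Q that])
  have IH: "\<And>x. x \<in> space S \<Longrightarrow> Vpi P H r ps (Suc n) x - Vest H pk Qk (Suc n) x =
    (\<Sum>h=Suc n..H. Etg P ps h (Gh h) (h - Suc n) x)"
    using step.IH step.prems unfolding Gh_def by auto
  have Vp: "bmb S (Vpi P H r ps (Suc n))"
    by (rule Vpi_bmb[OF rm rb policies_pmf[OF ps]]) auto
  have Ve: "bmb S (Vest H pk Qk (Suc n))"
    by (rule Vest_bmb[OF pkm Q]) auto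
  show ?case
  proof
    fix x assume x: "x \<in> space S"
    have e1: "Etg P ps h (Gh h) (h - n) x
        = Jop ps n (\<lambda>y b. Pop P n (Etg P ps h (Gh h) (h - Suc n)) y b) x" if "h \<in> {Suc n..H}" for h
    proof -
      have "h - n = Suc (h - Suc n)" "h - Suc (h - Suc n) = n" using that by auto
      then show ?thesis by simp
    qed
    have "(\<Sum>h=n..H. Etg P ps h (Gh h) (h - n) x)
        = Etg P ps n (Gh n) 0 x + (\<Sum>h=Suc n..H. Etg P ps h (Gh h) (h - n) x)"
      using n by (simp add: sum.atLeast_Suc_atMost)
    also have "\<dots> = Jop ps n (Gh n) x +
        (\<Sum>h=Suc n..H. Jop ps n (\<lambda>y b. Pop P n (Etg P ps h (Gh h) (h - Suc n)) y b) x)"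
      using e1 by simp
    also have "\<dots> = Jop ps n (Gh n) x +
        Jop ps n (\<lambda>y b. \<Sum>h=Suc n..H. Pop P n (Etg P ps h (Gh h) (h - Suc n)) y b) x"
      by (simp add: Jop_sum)
    also have "\<dots> = Jop ps n (Gh n) x +
        Jop ps n (\<lambda>y b. Pop P n (Vpi P H r ps (Suc n)) y b - Pop P n (Vest H pk Qk (Suc n)) y b) x"
    proof -
      have "(\<Sum>h=Suc n..H. Pop P n (Etg P ps h (Gh h) (h - Suc n)) x b)
          = Pop P n (Vpi P H r ps (Suc n)) x b - Pop P n (Vest H pk Qk (Suc n)) x b" for b
      proof -
        have "(\<Sum>h=Suc n..H. Pop P n (Etg P ps h (Gh h) (h - Suc n)) x b)
            = Pop P n (\<lambda>y. \<Sum>h=Suc n..H. Etg P ps h (Gh h) (h - Suc n) y) x b"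
          by (rule Pop_sum[OF n x, symmetric]) (intro Etg_bmb[OF ps Gh]; auto)
        also have "\<dots> = Pop P n (\<lambda>y. Vpi P H r ps (Suc n) y - Vest H pk Qk (Suc n) y) x b"
          by (rule Pop_cong[OF n x]) (simp add: IH)
        also have "\<dots> = Pop P n (Vpi P H r ps (Suc n)) x b - Pop P n (Vest H pk Qk (Suc n)) x b"
          by (rule Pop_diff[OF n x Vp Ve])
        finally show ?thesis .
      qed
      then show ?thesis by (intro arg_cong2[where f="(+)"] refl Jop_cong) simp
    qed
    also have "\<dots> = Jop ps n (\<lambda>y b. fadv ps pk Qk n y b + (r n y b + Pop P n (Vpi P H r ps (Suc n)) y b) - Qk n y b) x"
      unfolding Jop_add[symmetric] Gh_def iota_def by (rule Jop_cong) simp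
    also have "\<dots> = fadv ps pk Qk n x undefined + Vpi P H r ps n x - Jop ps n (Qk n) x"
      unfolding Jop_diff Jop_add Vpi_step[OF n]
      by (simp add: fadv_def Jop_const)
    also have "\<dots> = Vpi P H r ps n x - Vest H pk Qk n x"
      using n by (simp add: fadv_def Vest_def Jop_def left_diff_distrib sum_subtractf)
    finally show "Vpi P H r ps n x - Vest H pk Qk n x = (\<Sum>h=n..H. Etg P ps h (\<lambda>y b. fadv ps pk Qk h y b + iota P H r pk Qk h y b) (h - n) x)"
      unfolding Gh_def by simp
  qed
qed

lemma ident2_step:
  assumes pkm: "\<And>h b. h \<in> {1..H} \<Longrightarrow> (\<lambda>x. pmf (pk h x) b) \<in> borel_measurable S"
    and rm: "\<And>h b. h \<in> {1..H} \<Longrightarrow> (\<lambda>x. r h x b) \<in> borel_measurable S"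
    and rb: "\<And>h b x. h \<in> {1..H} \<Longrightarrow> x \<in> space S \<Longrightarrow> \<bar>r h x b\<bar> \<le> 1"
    and Q: "\<And>h. h \<in> {1..H} \<Longrightarrow> bmb2 S (Qk h)"
    and j: "j \<in> {1..H}" and x: "x \<in> space S"
  shows "(Jop pk j (\<lambda>y b. Qk j y b - Qpi P H r pk j y b) x - (Qk j x a - Qpi P H r pk j x a))
       + (Pop P j (\<lambda>y. Vest H pk Qk (Suc j) y - Vpi P H r pk (Suc j) y) x a
          - (Vest H pk Qk (Suc j) x' - Vpi P H r pk (Suc j) x'))
       - iota P H r pk Qk j x a
     = (Vest H pk Qk j x - Vpi P H r pk j x) - (Vest H pk Qk (Suc j) x' - Vpi P H r pk (Suc j) x')"
proof -
  have Vp: "bmb S (Vpi P H r pk (Suc j))"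
    by (rule Vpi_bmb[OF rm rb pkm]) auto
  have Ve: "bmb S (Vest H pk Qk (Suc j))"
    by (rule Vest_bmb[OF pkm Q]) auto
  have 1: "Jop pk j (\<lambda>y b. Qk j y b - Qpi P H r pk j y b) x = Vest H pk Qk j x - Vpi P H r pk j x"
    using j by (simp add: Jop_diff Vpi_step_Q[OF j] Vest_def)
  have 2: "Pop P j (\<lambda>y. Vest H pk Qk (Suc j) y - Vpi P H r pk (Suc j) y) x a
      = Pop P j (Vest H pk Qk (Suc j)) x a - Pop P j (Vpi P H r pk (Suc j)) x a"
    by (rule Pop_diff[OF j x Ve Vp])
  show ?thesis unfolding 1 2 by (simp add: Qpi_def iota_def)
qed

end

definition Fgens :: "'w measure \<Rightarrow> 's measure \<Rightarrow> nat \<Rightarrow> (nat \<Rightarrow> 'w \<Rightarrow> nat \<Rightarrow> 's \<Rightarrow> 'a \<Rightarrow> real)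
    \<Rightarrow> (nat \<Rightarrow> nat \<Rightarrow> 'w \<Rightarrow> 's) \<Rightarrow> (nat \<Rightarrow> nat \<Rightarrow> 'w \<Rightarrow> 'a) \<Rightarrow> nat \<Rightarrow> nat \<Rightarrow> nat \<Rightarrow> 'w set set" where
  "Fgens M S H R X A k h m =
     ({X \<tau> i -` B \<inter> space M | \<tau> i B. \<tau> \<in> {1..<k} \<and> i \<in> {1..H} \<and> B \<in> sets S}
    \<union> {A \<tau> i -` B \<inter> space M | \<tau> i B. \<tau> \<in> {1..<k} \<and> i \<in> {1..H}}
    \<union> {(\<lambda>w. R \<tau> w i x a) -` B \<inter> space M | \<tau> i x a B.
          \<tau> \<in> {1..k} \<and> i \<in> {1..H} \<and> x \<in> space S \<and> B \<in> sets borel}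
    \<union> {X k i -` B \<inter> space M | i B. i \<in> {1..h} \<and> B \<in> sets S}
    \<union> {A k i -` B \<inter> space M | i B. i \<in> {1..h}}
    \<union> {X k (Suc h) -` B \<inter> space M | B. m = 2 \<and> h < H \<and> B \<in> sets S})"

lemma Fgen_Fgens: "Fgen M S H R X A k h m = sigma (space M) (Fgens M S H R X A k h m)"
  by (simp add: Fgen_def Fgens_def)

lemma Fgens_Pow: "Fgens M S H R X A k h m \<subseteq> Pow (space M)"
  by (auto simp: Fgens_def)

lemma space_Fgen[simp]: "space (Fgen M S H R X A k h m) = space M"
  unfolding Fgen_Fgens by (rule space_measure_of[OF Fgens_Pow])

lemma sets_Fgen: "sets (Fgen M S H R X A k h m) = sigma_sets (space M) (Fgens M S H R X A k h m)"
  unfolding Fgen_Fgens by (rule sets_measure_of[OF Fgens_Pow])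

lemma Fgen_mono:
  "Fgens M S H R X A k h m \<subseteq> Fgens M S H R X A k' h' m' \<Longrightarrow>
   sets (Fgen M S H R X A k h m) \<subseteq> sets (Fgen M S H R X A k' h' m')"
  unfolding sets_Fgen by (rule sigma_sets_mono')

definition "gXo M S (H::nat) (X :: nat \<Rightarrow> nat \<Rightarrow> _) (k::nat) = {X \<tau> i -` B \<inter> space M | \<tau> i B. \<tau> \<in> {1..<k} \<and> i \<in> {1..H} \<and> B \<in> sets S}"
definition "gAo M (H::nat) (A :: nat \<Rightarrow> nat \<Rightarrow> _) (k::nat) = {A \<tau> i -` B \<inter> space M | \<tau> i B. \<tau> \<in> {1..<k} \<and> i \<in> {1..H}}"
definition "gR M S (H::nat) (R :: nat \<Rightarrow> _) (k::nat) = {(\<lambda>w. R \<tau> w i x a) -` B \<inter> space M | \<tau> i x a B.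
          \<tau> \<in> {1..k} \<and> i \<in> {1..H} \<and> x \<in> space S \<and> B \<in> sets borel}"
definition "gXc M S (X :: nat \<Rightarrow> nat \<Rightarrow> _) (k::nat) (h::nat) = {X k i -` B \<inter> space M | i B. i \<in> {1..h} \<and> B \<in> sets S}"
definition "gAc M (A :: nat \<Rightarrow> nat \<Rightarrow> _) (k::nat) (h::nat) = {A k i -` B \<inter> space M | i B. i \<in> {1..h}}"
definition "gXn M S (H::nat) (X :: nat \<Rightarrow> nat \<Rightarrow> _) (k::nat) (h::nat) (m::nat) = {X k (Suc h) -` B \<inter> space M | B. m = (2::nat) \<and> h < H \<and> B \<in> sets S}"

lemma Fgens_alt: "Fgens M S H R X A k h m = gXo M S H X k \<union> gAo M H A k \<union> gR M S H R k \<union>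
   gXc M S X k h \<union> gAc M A k h \<union> gXn M S H X k h m"
  unfolding Fgens_def gXo_def gAo_def gR_def gXc_def gAc_def gXn_def ..

lemma gXo_mono: assumes "k \<le> k'" shows "gXo M S H X k \<subseteq> gXo M S H X k'"
proof
  fix z assume "z \<in> gXo M S H X k"
  then obtain \<tau> i B where "z = X \<tau> i -` B \<inter> space M" "\<tau> \<in> {1..<k}" "i \<in> {1..H}" "B \<in> sets S"
    unfolding gXo_def by blast
  then show "z \<in> gXo M S H X k'" unfolding gXo_def using assms
    by (intro CollectI exI[of _ \<tau>] exI[of _ i] exI[of _ B]) auto
qed
lemma gAo_mono: assumes "k \<le> k'" shows "gAo M H A k \<subseteq> gAo M H A k'"
proof
  fix z assume "z \<in> gAo M H A k"
  then obtain \<tau> i B where "z = A \<tau> i -` B \<inter> space M" "\<tau> \<in> {1..<k}" "i \<in> {1..H}"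
    unfolding gAo_def by blast
  then show "z \<in> gAo M H A k'" unfolding gAo_def using assms
    by (intro CollectI exI[of _ \<tau>] exI[of _ i] exI[of _ B]) auto
qed
lemma gR_mono: assumes "k \<le> k'" shows "gR M S H R k \<subseteq> gR M S H R k'"
proof
  fix z assume "z \<in> gR M S H R k"
  then obtain \<tau> i x a B where "z = (\<lambda>w. R \<tau> w i x a) -` B \<inter> space M" "\<tau> \<in> {1..k}" "i \<in> {1..H}"
    "x \<in> space S" "B \<in> sets borel"
    unfolding gR_def by blast
  then show "z \<in> gR M S H R k'" unfolding gR_def using assms
    by (intro CollectI exI[of _ \<tau>] exI[of _ i] exI[of _ x] exI[of _ a] exI[of _ B]) auto
qed
lemma gXc_mono: assumes "h \<le> h'" shows "gXc M S X k h \<subseteq> gXc M S X k h'"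
proof
  fix z assume "z \<in> gXc M S X k h"
  then obtain i B where "z = X k i -` B \<inter> space M" "i \<in> {1..h}" "B \<in> sets S"
    unfolding gXc_def by blast
  then show "z \<in> gXc M S X k h'" unfolding gXc_def using assms
    by (intro CollectI exI[of _ i] exI[of _ B]) auto
qed
lemma gAc_mono: assumes "h \<le> h'" shows "gAc M A k h \<subseteq> gAc M A k h'"
proof
  fix z assume "z \<in> gAc M A k h"
  then obtain i B where "z = A k i -` B \<inter> space M" "i \<in> {1..h}"
    unfolding gAc_def by blast
  then show "z \<in> gAc M A k h'" unfolding gAc_def using assms
    by (intro CollectI exI[of _ i] exI[of _ B]) auto
qed
lemma gXn_sub: assumes "h < H" shows "gXn M S H X k h m \<subseteq> gXc M S X k (Suc h)"
proof
  fix z assume "z \<in> gXn M S H X k h m"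
  then obtain B where "z = X k (Suc h) -` B \<inter> space M" "B \<in> sets S"
    unfolding gXn_def by blast
  then show "z \<in> gXc M S X k (Suc h)" unfolding gXc_def
    by (intro CollectI exI[of _ "Suc h"] exI[of _ B]) auto
qed
lemma gXn_empty: "m \<noteq> 2 \<or> \<not> h < H \<Longrightarrow> gXn M S H X k h m = {}"
  unfolding gXn_def by auto
lemma gXc_o: assumes "1 \<le> k" "h \<le> H" shows "gXc M S X k h \<subseteq> gXo M S H X (Suc k)"
proof
  fix z assume "z \<in> gXc M S X k h"
  then obtain i B where "z = X k i -` B \<inter> space M" "i \<in> {1..h}" "B \<in> sets S"
    unfolding gXc_def by blast
  then show "z \<in> gXo M S H X (Suc k)" unfolding gXo_def using assms
    by (intro CollectI exI[of _ k] exI[of _ i] exI[of _ B]) auto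
qed
lemma gAc_o: assumes "1 \<le> k" "h \<le> H" shows "gAc M A k h \<subseteq> gAo M H A (Suc k)"
proof
  fix z assume "z \<in> gAc M A k h"
  then obtain i B where "z = A k i -` B \<inter> space M" "i \<in> {1..h}"
    unfolding gAc_def by blast
  then show "z \<in> gAo M H A (Suc k)" unfolding gAo_def using assms
    by (intro CollectI exI[of _ k] exI[of _ i] exI[of _ B]) auto
qed
lemma gXc_0: "gXc M S X k 0 = {}" unfolding gXc_def by auto
lemma gAc_0: "gAc M A k 0 = {}" unfolding gAc_def by auto

lemma Fgens_12: "Fgens M S H R X A k h 1 \<subseteq> Fgens M S H R X A k h 2"
proof -
  have "gXn M S H X k h 1 = {}" by (simp add: gXn_empty)
  then show ?thesis unfolding Fgens_alt by blast
qed

lemma Fgens_2S: "h < H \<Longrightarrow> Fgens M S H R X A k h 2 \<subseteq> Fgens M S H R X A k (Suc h) 1"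
proof -
  assume h: "h < H"
  have 1: "gXn M S H X k h 2 \<subseteq> gXc M S X k (Suc h)" by (rule gXn_sub[OF h])
  have 2: "gXc M S X k h \<subseteq> gXc M S X k (Suc h)" by (rule gXc_mono) simp
  have 3: "gAc M A k h \<subseteq> gAc M A k (Suc h)" by (rule gAc_mono) simp
  show ?thesis unfolding Fgens_alt using 1 2 3 by blast
qed

lemma Fgens_Hk: "1 \<le> k \<Longrightarrow> Fgens M S H R X A k H 2 \<subseteq> Fgens M S H R X A (Suc k) 1 1"
proof -
  assume k: "1 \<le> k"
  have 0: "gXn M S H X k H 2 = {}" by (simp add: gXn_empty)
  have 1: "gXc M S X k H \<subseteq> gXo M S H X (Suc k)" by (rule gXc_o[OF k]) simp
  have 2: "gAc M A k H \<subseteq> gAo M H A (Suc k)" by (rule gAc_o[OF k]) simp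
  have 3: "gXo M S H X k \<subseteq> gXo M S H X (Suc k)" by (rule gXo_mono) simp
  have 4: "gAo M H A k \<subseteq> gAo M H A (Suc k)" by (rule gAo_mono) simp
  have 5: "gR M S H R k \<subseteq> gR M S H R (Suc k)" by (rule gR_mono) simp
  show ?thesis unfolding Fgens_alt using 0 1 2 3 4 5 by blast
qed

lemma Fgens_0: "1 \<le> h \<Longrightarrow> Fgens M S H R X A k 0 2 \<subseteq> Fgens M S H R X A k h m"
proof -
  assume h: "1 \<le> h"
  have "gXn M S H X k 0 2 \<subseteq> gXc M S X k h"
  proof (cases "0 < H")
    case True
    have "gXn M S H X k 0 2 \<subseteq> gXc M S X k (Suc 0)" by (rule gXn_sub[OF True])
    also have "\<dots> \<subseteq> gXc M S X k h" by (rule gXc_mono) (use h in simp)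
    finally show ?thesis .
  qed (simp add: gXn_empty)
  moreover have "gXc M S X k 0 = {}" "gAc M A k 0 = {}" by (rule gXc_0, rule gAc_0)
  ultimately show ?thesis unfolding Fgens_alt by blast
qed

lemma Fgens_prev: "2 \<le> k \<Longrightarrow> Fgens M S H R X A (k - 1) H 2 \<subseteq> Fgens M S H R X A k 0 2"
proof -
  assume k: "2 \<le> k"
  then have e: "Suc (k - 1) = k" and k1: "1 \<le> k - 1" by auto
  have 0: "gXn M S H X (k-1) H 2 = {}" by (simp add: gXn_empty)
  have 1: "gXc M S X (k-1) H \<subseteq> gXo M S H X (Suc (k-1))" by (rule gXc_o[OF k1]) simp
  have 2: "gAc M A (k-1) H \<subseteq> gAo M H A (Suc (k-1))" by (rule gAc_o[OF k1]) simp
  note 1 = 1[unfolded e] and 2 = 2[unfolded e]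
  have 3: "gXo M S H X (k-1) \<subseteq> gXo M S H X k" by (rule gXo_mono) simp
  have 4: "gAo M H A (k-1) \<subseteq> gAo M H A k" by (rule gAo_mono) simp
  have 5: "gR M S H R (k-1) \<subseteq> gR M S H R k" by (rule gR_mono) simp
  show ?thesis unfolding Fgens_alt using 0 1 2 3 4 5 by blast
qed

lemma id_meas_sets: "sets G1 \<subseteq> sets G2 \<Longrightarrow> space G1 = space G2 \<Longrightarrow> (\<lambda>w. w) \<in> G2 \<rightarrow>\<^sub>M G1"
  by (rule measurableI) auto

lemma subalg_prob:
  assumes "prob_space M" "subalgebra M G"
  shows "sigma_finite_subalgebra M G"
proof -
  interpret prob_space M by fact
  have "finite_measure_subalgebra M G"
    unfolding finite_measure_subalgebra_def finite_measure_subalgebra_axioms_def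
    using assms(2) finite_measure_axioms by auto
  then show ?thesis by (rule finite_measure_subalgebra_is_sigma_finite)
qed

locale oppo =
  fixes M :: "'w measure" and S :: "'s measure"
    and P :: "nat \<Rightarrow> 's \<Rightarrow> 'a::finite \<Rightarrow> 's measure"
    and H K :: nat and x1 :: 's
    and R :: "nat \<Rightarrow> 'w \<Rightarrow> nat \<Rightarrow> 's \<Rightarrow> 'a \<Rightarrow> real"
    and Pol :: "nat \<Rightarrow> 'w \<Rightarrow> nat \<Rightarrow> 's \<Rightarrow> 'a pmf"
    and Q :: "nat \<Rightarrow> 'w \<Rightarrow> nat \<Rightarrow> 's \<Rightarrow> 'a \<Rightarrow> real"
    and X :: "nat \<Rightarrow> nat \<Rightarrow> 'w \<Rightarrow> 's"
    and A :: "nat \<Rightarrow> nat \<Rightarrow> 'w \<Rightarrow> 'a"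
  assumes M: "prob_space M"
    and kernel_prob: "\<And>h x a. h \<in> {1..H} \<Longrightarrow> x \<in> space S \<Longrightarrow> prob_space (P h x a)"
    and kernel_meas: "\<And>h a. h \<in> {1..H} \<Longrightarrow> (\<lambda>x. P h x a) \<in> S \<rightarrow>\<^sub>M subprob_algebra S"
    and x1: "x1 \<in> space S"
    and init: "\<And>k w. k \<in> {1..K} \<Longrightarrow> w \<in> space M \<Longrightarrow> X k 1 w = x1"
    and X_meas: "\<And>k h. k \<in> {1..K} \<Longrightarrow> h \<in> {1..H} \<Longrightarrow> X k h \<in> M \<rightarrow>\<^sub>M S"
    and A_meas: "\<And>k h. k \<in> {1..K} \<Longrightarrow> h \<in> {1..H} \<Longrightarrow> A k h \<in> M \<rightarrow>\<^sub>M count_space UNIV"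
    and R_meas: "\<And>k h x a. k \<in> {1..K} \<Longrightarrow> h \<in> {1..H} \<Longrightarrow> x \<in> space S \<Longrightarrow>
                   (\<lambda>w. R k w h x a) \<in> borel_measurable M"
    and R_joint: "\<And>k h a. k \<in> {1..K} \<Longrightarrow> h \<in> {1..H} \<Longrightarrow>
                   (\<lambda>(w, x). R k w h x a) \<in> borel_measurable (Fgen M S H R X A k 0 2 \<Otimes>\<^sub>M S)"
    and R_range: "\<And>k h w x a. k \<in> {1..K} \<Longrightarrow> h \<in> {1..H} \<Longrightarrow> w \<in> space M \<Longrightarrow> x \<in> space S \<Longrightarrow>
                   0 \<le> R k w h x a \<and> R k w h x a \<le> 1"
    and Pi_joint: "\<And>k h a. k \<in> {1..K} \<Longrightarrow> h \<in> {1..H} \<Longrightarrow>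
                   (\<lambda>(w, x). pmf (Pol k w h x) a) \<in> borel_measurable (Fgen M S H R X A k 0 2 \<Otimes>\<^sub>M S)"
    and Q_joint: "\<And>k h a. k \<in> {1..K} \<Longrightarrow> h \<in> {1..H} \<Longrightarrow>
                   (\<lambda>(w, x). Q k w h x a) \<in> borel_measurable (Fgen M S H R X A k 0 2 \<Otimes>\<^sub>M S)"
    and Q_range: "\<And>k h w x a. k \<in> {1..K} \<Longrightarrow> h \<in> {1..H} \<Longrightarrow> w \<in> space M \<Longrightarrow> x \<in> space S \<Longrightarrow>
                   0 \<le> Q k w h x a \<and> Q k w h x a \<le> real (H - h + 1)"
    and act: "\<And>k h a. k \<in> {1..K} \<Longrightarrow> h \<in> {1..H} \<Longrightarrow>
               AE w in M. real_cond_exp M (Fgen M S H R X A k (h - 1) 2) (\<lambda>w. indicator {a} (A k h w)) w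
                          = pmf (Pol k w h (X k h w)) a"
    and trans: "\<And>k h g B. k \<in> {1..K} \<Longrightarrow> h \<in> {1..<H} \<Longrightarrow>
               g \<in> borel_measurable (Fgen M S H R X A k h 1 \<Otimes>\<^sub>M S) \<Longrightarrow> (\<forall>z. \<bar>g z\<bar> \<le> B) \<Longrightarrow>
               AE w in M. real_cond_exp M (Fgen M S H R X A k h 1) (\<lambda>w. g (w, X k (Suc h) w)) w
                          = (\<integral>y. g (w, y) \<partial>(P h (X k h w) (A k h w)))"

sublocale oppo \<subseteq> mdp S P H
  by (rule mdp.intro) (auto intro: kernel_prob kernel_meas)

context oppo
begin

abbreviation FG where "FG k h m \<equiv> Fgen M S H R X A k h m"

lemma FG_subalg:
  assumes k: "k \<in> {1..K}" and h: "h \<le> H"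
  shows "subalgebra M (FG k h m)"
proof -
  have "Fgens M S H R X A k h m \<subseteq> sets M"
    unfolding Fgens_def
  proof (intro Un_least subsetI; elim CollectE exE conjE)
    fix Z \<tau> i B assume "Z = X \<tau> i -` B \<inter> space M" "\<tau> \<in> {1..<k}" "i \<in> {1..H}" "B \<in> sets S"
    then show "Z \<in> sets M" using measurable_sets[OF X_meas] k by auto
  next
    fix Z \<tau> i B assume "Z = A \<tau> i -` B \<inter> space M" "\<tau> \<in> {1..<k}" "i \<in> {1..H}"
    then show "Z \<in> sets M" using measurable_sets[OF A_meas] k by auto
  next
    fix Z \<tau> i x a B assume "Z = (\<lambda>w. R \<tau> w i x a) -` B \<inter> space M" "\<tau> \<in> {1..k}" "i \<in> {1..H}"
      "x \<in> space S" "B \<in> sets borel"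
    then show "Z \<in> sets M" using measurable_sets[OF R_meas] k by auto
  next
    fix Z i B assume "Z = X k i -` B \<inter> space M" "i \<in> {1..h}" "B \<in> sets S"
    then show "Z \<in> sets M" using measurable_sets[OF X_meas] k h by auto
  next
    fix Z i B assume "Z = A k i -` B \<inter> space M" "i \<in> {1..h}"
    then show "Z \<in> sets M" using measurable_sets[OF A_meas] k h by auto
  next
    fix Z B assume "Z = X k (Suc h) -` B \<inter> space M" "m = 2" "h < H" "B \<in> sets S"
    then show "Z \<in> sets M" using measurable_sets[OF X_meas] k h by auto
  qed
  then show ?thesis
    unfolding subalgebra_def sets_Fgen using sets.sigma_sets_subset[of _ M] by auto
qed

lemma X_FG:
  assumes k: "k \<in> {1..K}" and i: "i \<in> {1..h}" and h: "h \<le> H"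
  shows "X k i \<in> FG k h m \<rightarrow>\<^sub>M S"
proof (rule measurableI)
  show "X k i w \<in> space S" if "w \<in> space (FG k h m)" for w
    using measurable_space[OF X_meas[of k i]] that k i h by auto
  show "X k i -` B \<inter> space (FG k h m) \<in> sets (FG k h m)" if "B \<in> sets S" for B
    unfolding sets_Fgen space_Fgen
    by (rule sigma_sets.Basic) (use that i in \<open>auto simp: Fgens_def\<close>)
qed

lemma X_FG2:
  assumes k: "k \<in> {1..K}" and h: "h < H"
  shows "X k (Suc h) \<in> FG k h 2 \<rightarrow>\<^sub>M S"
proof (rule measurableI)
  show "X k (Suc h) w \<in> space S" if "w \<in> space (FG k h 2)" for w
    using measurable_space[OF X_meas[of k "Suc h"]] that k h by auto
  show "X k (Suc h) -` B \<inter> space (FG k h 2) \<in> sets (FG k h 2)" if "B \<in> sets S" for B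
    unfolding sets_Fgen space_Fgen
    by (rule sigma_sets.Basic) (use that h in \<open>auto simp: Fgens_def\<close>)
qed

lemma A_FG:
  assumes i: "i \<in> {1..h}"
  shows "A k i \<in> FG k h m \<rightarrow>\<^sub>M count_space UNIV"
proof (rule measurableI)
  show "A k i -` B \<inter> space (FG k h m) \<in> sets (FG k h m)" if "B \<in> sets (count_space UNIV)" for B
    unfolding sets_Fgen space_Fgen
    by (rule sigma_sets.Basic) (use that i in \<open>auto simp: Fgens_def\<close>)
qed auto

lemma compose_G0:
  assumes f: "(\<lambda>(w,y). f w y) \<in> borel_measurable (FG k 0 2 \<Otimes>\<^sub>M S)"
    and G: "sets (FG k 0 2) \<subseteq> sets G" "space G = space M" and Y: "Y \<in> G \<rightarrow>\<^sub>M S"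
  shows "(\<lambda>w. f w (Y w)) \<in> borel_measurable G"
proof -
  have "(\<lambda>w. (w, Y w)) \<in> G \<rightarrow>\<^sub>M FG k 0 2 \<Otimes>\<^sub>M S"
    by (rule measurable_Pair[OF id_meas_sets Y]) (use G in auto)
  from measurable_compose[OF this f] show ?thesis by simp
qed

lemma G0_sub: "1 \<le> h \<Longrightarrow> sets (FG k 0 2) \<subseteq> sets (FG k h m)"
  by (rule Fgen_mono[OF Fgens_0])

lemma Q_bnd: "k \<in> {1..K} \<Longrightarrow> h \<in> {1..H} \<Longrightarrow> w \<in> space M \<Longrightarrow> x \<in> space S \<Longrightarrow> \<bar>Q k w h x a\<bar> \<le> real H"
  using Q_range[of k h w x a] by auto

lemma R_bnd: "k \<in> {1..K} \<Longrightarrow> h \<in> {1..H} \<Longrightarrow> w \<in> space M \<Longrightarrow> x \<in> space S \<Longrightarrow> \<bar>R k w h x a\<bar> \<le> 1"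
  using R_range[of k h w x a] by auto

lemma Vpi_J:
  assumes k: "k \<in> {1..K}" and j: "1 \<le> j"
  shows "(\<lambda>(w,y). Vpi P H (R k w) (Pol k w) j y) \<in> borel_measurable (FG k 0 2 \<Otimes>\<^sub>M S)"
    "\<And>w y. w \<in> space M \<Longrightarrow> y \<in> space S \<Longrightarrow> \<bar>Vpi P H (R k w) (Pol k w) j y\<bar> \<le> real H"
proof -
  have "(\<lambda>(w,x). Vtg P H (R k w) (Pol k w) (Suc H - j) x) \<in> borel_measurable (FG k 0 2 \<Otimes>\<^sub>M S) \<and>
           (\<forall>w\<in>space (FG k 0 2). \<forall>x\<in>space S. \<bar>Vtg P H (R k w) (Pol k w) (Suc H - j) x\<bar> \<le> real (Suc H - j))"
    by (rule Vtg_joint) (use R_joint[OF k] Pi_joint[OF k] R_bnd[OF k] j in auto)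
  then show "(\<lambda>(w,y). Vpi P H (R k w) (Pol k w) j y) \<in> borel_measurable (FG k 0 2 \<Otimes>\<^sub>M S)"
    "\<And>w y. w \<in> space M \<Longrightarrow> y \<in> space S \<Longrightarrow> \<bar>Vpi P H (R k w) (Pol k w) j y\<bar> \<le> real H"
    using j by (auto simp: Vpi_def intro: order_trans[OF _ of_nat_mono[of "Suc H - j" H]])
qed

lemma Qpi_J:
  assumes k: "k \<in> {1..K}" and h: "h \<in> {1..H}"
  shows "(\<lambda>(w,y). Qpi P H (R k w) (Pol k w) h y b) \<in> borel_measurable (FG k 0 2 \<Otimes>\<^sub>M S)"
    "\<And>w y. w \<in> space M \<Longrightarrow> y \<in> space S \<Longrightarrow> \<bar>Qpi P H (R k w) (Pol k w) h y b\<bar> \<le> 1 + real H"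
proof -
  have pj: "(\<lambda>(w,x). Pop P h (Vpi P H (R k w) (Pol k w) (Suc h)) x b) \<in> borel_measurable (FG k 0 2 \<Otimes>\<^sub>M S)"
    by (rule Pop_joint[OF h Vpi_J(1)[OF k], where B="real H"]) (use Vpi_J(2)[OF k] in auto)
  show "(\<lambda>(w,y). Qpi P H (R k w) (Pol k w) h y b) \<in> borel_measurable (FG k 0 2 \<Otimes>\<^sub>M S)"
    unfolding Qpi_def using R_joint[OF k h] pj unfolding case_prod_beta'
    by (intro borel_measurable_add) auto
  fix w y assume w: "w \<in> space M" and y: "y \<in> space S"
  have sm: "Vpi P H (R k w) (Pol k w) (Suc h) \<in> borel_measurable S"
    using measurable_Pair2[OF Vpi_J(1)[OF k, of "Suc h"], of w] w by simp
  show "\<bar>Qpi P H (R k w) (Pol k w) h y b\<bar> \<le> 1 + real H"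
    unfolding Qpi_def
    by (rule order_trans[OF abs_triangle_ineq add_mono])
       (auto intro!: R_bnd[OF k h w y] Pop_bnd[OF h y sm] Vpi_J(2)[OF k _ w])
qed

lemma Vest_J:
  assumes k: "k \<in> {1..K}" and j: "1 \<le> j"
  shows "(\<lambda>(w,y). Vest H (Pol k w) (Q k w) j y) \<in> borel_measurable (FG k 0 2 \<Otimes>\<^sub>M S)"
    "\<And>w y. w \<in> space M \<Longrightarrow> y \<in> space S \<Longrightarrow> \<bar>Vest H (Pol k w) (Q k w) j y\<bar> \<le> real H"
proof -
  show "(\<lambda>(w,y). Vest H (Pol k w) (Q k w) j y) \<in> borel_measurable (FG k 0 2 \<Otimes>\<^sub>M S)"
  proof (cases "j \<le> H")
    case True
    then have jj: "j \<in> {1..H}" using j by auto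
    have "(\<lambda>z. \<Sum>a\<in>UNIV. pmf (Pol k (fst z) j (snd z)) a * Q k (fst z) j (snd z) a)
        \<in> borel_measurable (FG k 0 2 \<Otimes>\<^sub>M S)"
      using Pi_joint[OF k jj] Q_joint[OF k jj] unfolding case_prod_beta'
      by (intro borel_measurable_sum borel_measurable_times) auto
    then show ?thesis by (simp add: Vest_def Jop_def True case_prod_beta')
  qed (simp add: Vest_def)
  fix w y assume w: "w \<in> space M" and y: "y \<in> space S"
  show "\<bar>Vest H (Pol k w) (Q k w) j y\<bar> \<le> real H"
    unfolding Vest_def using j by (auto intro!: Jop_bnd Q_bnd[OF k _ w y])
qed

end

lemma Jop_J:
  assumes "\<And>b. (\<lambda>(w,y). pmf (pol w h y) b) \<in> borel_measurable (G \<Otimes>\<^sub>M S)"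
    "\<And>b. (\<lambda>(w,y). F w y b) \<in> borel_measurable (G \<Otimes>\<^sub>M S)"
  shows "(\<lambda>(w,y). Jop (pol w) h (F w) y) \<in> borel_measurable (G \<Otimes>\<^sub>M S)"
  unfolding Jop_def using assms unfolding case_prod_beta'
  by (intro borel_measurable_sum borel_measurable_times) auto

lemma sum_indicator_single: "(\<Sum>b\<in>UNIV. f b * indicator {b} (a::'a::finite)) = (f a :: real)"
proof -
  have "(\<Sum>b\<in>UNIV. f b * indicator {b} a) = (\<Sum>b\<in>UNIV. if b = a then f b else 0)"
    by (rule sum.cong) (auto simp: indicator_def)
  also have "\<dots> = f a" by (simp add: sum.delta)
  finally show ?thesis .
qed

lemma abs_diff_le2: "\<bar>a\<bar> \<le> c \<Longrightarrow> \<bar>b\<bar> \<le> c \<Longrightarrow> \<bar>a - b\<bar> \<le> 2 * (c::real)"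
  by linarith

lemma Dterm_1: "Dterm P H R Pol Q X A k h 1 = D1 P H R Pol Q X A k h"
  by (rule ext) (simp add: Dterm_def)

lemma Dterm_2: "Dterm P H R Pol Q X A k h 2 = D2 P H R Pol Q X A k h"
  by (rule ext) (simp add: Dterm_def)

context oppo
begin

lemma X_space: "k \<in> {1..K} \<Longrightarrow> h \<in> {1..H} \<Longrightarrow> w \<in> space M \<Longrightarrow> X k h w \<in> space S"
  using measurable_space[OF X_meas] by blast

lemma FF_J:
  assumes k: "k \<in> {1..K}" and h: "h \<in> {1..H}"
  shows "(\<lambda>(w,y). Q k w h y b - Qpi P H (R k w) (Pol k w) h y b) \<in> borel_measurable (FG k 0 2 \<Otimes>\<^sub>M S)"
  using Q_joint[OF k h] Qpi_J(1)[OF k h] unfolding case_prod_beta'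
  by (intro borel_measurable_diff) auto

lemma FF_bnd:
  assumes k: "k \<in> {1..K}" and h: "h \<in> {1..H}" and w: "w \<in> space M" and y: "y \<in> space S"
  shows "\<bar>Q k w h y b - Qpi P H (R k w) (Pol k w) h y b\<bar> \<le> 1 + 2 * real H"
  using Q_bnd[OF k h w y, of b] Qpi_J(2)[OF k h w y, of b] by linarith

lemma D1_eq: "D1 P H R Pol Q X A k h = (\<lambda>w.
    Jop (Pol k w) h (\<lambda>y b. Q k w h y b - Qpi P H (R k w) (Pol k w) h y b) (X k h w)
    - (Q k w h (X k h w) (A k h w) - Qpi P H (R k w) (Pol k w) h (X k h w) (A k h w)))"
  by (rule ext) (simp add: D1_def Let_def)

lemma D2_eq: "D2 P H R Pol Q X A k h = (\<lambda>w.
    Pop P h (\<lambda>y. Vest H (Pol k w) (Q k w) (Suc h) y - Vpi P H (R k w) (Pol k w) (Suc h) y) (X k h w) (A k h w)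
    - (Vest H (Pol k w) (Q k w) (Suc h) (X k (Suc h) w) - Vpi P H (R k w) (Pol k w) (Suc h) (X k (Suc h) w)))"
  by (rule ext) (simp add: D2_def Let_def)

lemma D2_H: "D2 P H R Pol Q X A k H w = 0"
  by (simp add: D2_eq Vest_SucH Vpi_SucH Pop_def)

lemma D1_meas:
  assumes k: "k \<in> {1..K}" and h: "h \<in> {1..H}"
    and G: "sets (FG k 0 2) \<subseteq> sets G" "space G = space M" and XG: "X k h \<in> G \<rightarrow>\<^sub>M S"
    and AG: "A k h \<in> G \<rightarrow>\<^sub>M count_space UNIV"
  shows "D1 P H R Pol Q X A k h \<in> borel_measurable G"
proof -
  have JJ: "(\<lambda>(w,y). Jop (Pol k w) h (\<lambda>y b. Q k w h y b - Qpi P H (R k w) (Pol k w) h y b) y)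
      \<in> borel_measurable (FG k 0 2 \<Otimes>\<^sub>M S)"
    by (rule Jop_J[where pol="Pol k" and F="\<lambda>w y b. Q k w h y b - Qpi P H (R k w) (Pol k w) h y b"])
       (simp_all add: Pi_joint[OF k h] FF_J[OF k h])
  have 1: "(\<lambda>w. Jop (Pol k w) h (\<lambda>y b. Q k w h y b - Qpi P H (R k w) (Pol k w) h y b) (X k h w))
      \<in> borel_measurable G"
    by (rule compose_G0[OF JJ G XG])
  have 2: "(\<lambda>w. Q k w h (X k h w) (A k h w) - Qpi P H (R k w) (Pol k w) h (X k h w) (A k h w))
      \<in> borel_measurable G"
    using measurable_compose_countable[where f="\<lambda>i w. Q k w h (X k h w) i - Qpi P H (R k w) (Pol k w) h (X k h w) i"
        and g="A k h", OF compose_G0[OF FF_J[OF k h] G XG] AG] by simp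
  show ?thesis unfolding D1_eq using 1 2 by (rule borel_measurable_diff)
qed

lemma g_J:
  assumes k: "k \<in> {1..K}"
  shows "(\<lambda>(w,y). Vest H (Pol k w) (Q k w) (Suc h) y - Vpi P H (R k w) (Pol k w) (Suc h) y)
      \<in> borel_measurable (FG k 0 2 \<Otimes>\<^sub>M S)"
  using Vest_J(1)[OF k, of "Suc h"] Vpi_J(1)[OF k, of "Suc h"] unfolding case_prod_beta'
  by (intro borel_measurable_diff) auto

lemma g_bnd:
  assumes k: "k \<in> {1..K}" and w: "w \<in> space M" and y: "y \<in> space S"
  shows "\<bar>Vest H (Pol k w) (Q k w) (Suc h) y - Vpi P H (R k w) (Pol k w) (Suc h) y\<bar> \<le> 2 * real H"
  using Vest_J(2)[OF k _ w y, of "Suc h"] Vpi_J(2)[OF k _ w y, of "Suc h"] by auto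

lemma D2_meas:
  assumes k: "k \<in> {1..K}" and h: "h \<in> {1..<H}"
  shows "D2 P H R Pol Q X A k h \<in> borel_measurable (FG k h 2)"
proof -
  have h1: "h \<in> {1..H}" "1 \<le> h" "h < H" using h by auto
  have G: "sets (FG k 0 2) \<subseteq> sets (FG k h 2)" "space (FG k h 2) = space M"
    using G0_sub[OF h1(2)] by auto
  have XG: "X k h \<in> FG k h 2 \<rightarrow>\<^sub>M S" by (rule X_FG[OF k]) (use h in auto)
  have XG2: "X k (Suc h) \<in> FG k h 2 \<rightarrow>\<^sub>M S" by (rule X_FG2[OF k h1(3)])
  have AG: "A k h \<in> FG k h 2 \<rightarrow>\<^sub>M count_space UNIV" by (rule A_FG) (use h in auto)
  have PJ: "(\<lambda>(w,x). Pop P h (\<lambda>y. Vest H (Pol k w) (Q k w) (Suc h) y - Vpi P H (R k w) (Pol k w) (Suc h) y) x b)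
      \<in> borel_measurable (FG k 0 2 \<Otimes>\<^sub>M S)" for b
    by (rule Pop_joint[OF h1(1) g_J[OF k], where B="2 * real H"]) (use g_bnd[OF k] in auto)
  have 1: "(\<lambda>w. Pop P h (\<lambda>y. Vest H (Pol k w) (Q k w) (Suc h) y - Vpi P H (R k w) (Pol k w) (Suc h) y) (X k h w) (A k h w))
     \<in> borel_measurable (FG k h 2)"
    using measurable_compose_countable[where f="\<lambda>i w. Pop P h (\<lambda>y. Vest H (Pol k w) (Q k w) (Suc h) y - Vpi P H (R k w) (Pol k w) (Suc h) y) (X k h w) i"
        and g="A k h", OF compose_G0[OF PJ G XG] AG] by simp
  have 2: "(\<lambda>w. Vest H (Pol k w) (Q k w) (Suc h) (X k (Suc h) w) - Vpi P H (R k w) (Pol k w) (Suc h) (X k (Suc h) w))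
     \<in> borel_measurable (FG k h 2)"
    using compose_G0[OF g_J[OF k] G XG2] by simp
  show ?thesis unfolding D2_eq using 1 2 by (rule borel_measurable_diff)
qed

lemma Dterm_meas:
  assumes k: "k \<in> {1..K}" and h: "h \<in> {1..H}" and m: "m \<in> {1..2}"
  shows "Dterm P H R Pol Q X A k h m \<in> borel_measurable (FG k h m)"
proof (cases "m = 1")
  case True
  have h1: "1 \<le> h" "h \<le> H" using h by auto
  have "D1 P H R Pol Q X A k h \<in> borel_measurable (FG k h 1)"
  proof (rule D1_meas[OF k h G0_sub[OF h1(1)]])
    show "X k h \<in> FG k h 1 \<rightarrow>\<^sub>M S" by (rule X_FG[OF k]) (use h in auto)
    show "A k h \<in> FG k h 1 \<rightarrow>\<^sub>M count_space UNIV" by (rule A_FG) (use h in auto)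
  qed simp
  then show ?thesis unfolding True Dterm_1 .
next
  case False
  then have m2: "m = 2" using m by auto
  show ?thesis
  proof (cases "h < H")
    case True
    then show ?thesis using D2_meas[OF k] h m2 by (simp add: Dterm_2)
  next
    case False
    then have "h = H" using h by auto
    have "D2 P H R Pol Q X A k H = (\<lambda>w. 0)" by (rule ext) (rule D2_H)
    then show ?thesis using m2 \<open>h = H\<close> by (simp add: Dterm_2)
  qed
qed

lemma D1_bnd:
  assumes k: "k \<in> {1..K}" and h: "h \<in> {1..H}" and w: "w \<in> space M"
  shows "\<bar>D1 P H R Pol Q X A k h w\<bar> \<le> 2 * (1 + 2 * real H)"
proof -
  have x: "X k h w \<in> space S" by (rule X_space[OF k h w])
  have "\<bar>Jop (Pol k w) h (\<lambda>y b. Q k w h y b - Qpi P H (R k w) (Pol k w) h y b) (X k h w)\<bar> \<le> 1 + 2 * real H"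
    by (rule Jop_bnd) (rule FF_bnd[OF k h w x])
  moreover have "\<bar>Q k w h (X k h w) (A k h w) - Qpi P H (R k w) (Pol k w) h (X k h w) (A k h w)\<bar> \<le> 1 + 2 * real H"
    by (rule FF_bnd[OF k h w x])
  ultimately show ?thesis unfolding D1_eq by (rule abs_diff_le2)
qed

lemma D2_bnd:
  assumes k: "k \<in> {1..K}" and h: "h \<in> {1..H}" and w: "w \<in> space M"
  shows "\<bar>D2 P H R Pol Q X A k h w\<bar> \<le> 4 * real H"
proof (cases "h < H")
  case True
  have x: "X k h w \<in> space S" by (rule X_space[OF k h w])
  have x2: "X k (Suc h) w \<in> space S" by (rule X_space[OF k _ w]) (use True in auto)
  have sm: "(\<lambda>y. Vest H (Pol k w) (Q k w) (Suc h) y - Vpi P H (R k w) (Pol k w) (Suc h) y) \<in> borel_measurable S"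
    using measurable_Pair2[OF g_J[OF k, of h], of w] w by simp
  have "\<bar>Pop P h (\<lambda>y. Vest H (Pol k w) (Q k w) (Suc h) y - Vpi P H (R k w) (Pol k w) (Suc h) y) (X k h w) (A k h w)\<bar>
      \<le> 2 * real H"
    by (rule Pop_bnd[OF h x sm]) (rule g_bnd[OF k w])
  moreover have "\<bar>Vest H (Pol k w) (Q k w) (Suc h) (X k (Suc h) w) - Vpi P H (R k w) (Pol k w) (Suc h) (X k (Suc h) w)\<bar>
      \<le> 2 * real H" by (rule g_bnd[OF k w x2])
  ultimately show ?thesis unfolding D2_eq using abs_diff_le2 by fastforce
next
  case False
  then have "h = H" using h by auto
  then show ?thesis by (simp add: D2_H)
qed

lemma Dterm_bnd:
  assumes k: "k \<in> {1..K}" and h: "h \<in> {1..H}" and w: "w \<in> space M"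
  shows "\<bar>Dterm P H R Pol Q X A k h m w\<bar> \<le> 2 + 4 * real H"
  using D1_bnd[OF k h w] D2_bnd[OF k h w] by (auto simp: Dterm_def)

lemma Dterm_int:
  assumes k: "k \<in> {1..K}" and h: "h \<in> {1..H}" and m: "m \<in> {1..2}"
  shows "integrable M (Dterm P H R Pol Q X A k h m)"
proof -
  interpret prob_space M by (rule M)
  have "Dterm P H R Pol Q X A k h m \<in> borel_measurable M"
    by (rule measurable_from_subalg[OF FG_subalg Dterm_meas[OF k h m]]) (use k h in auto)
  then show ?thesis
    by (intro integrable_const_bound[where B="2 + 4 * real H"] AE_I2) (auto intro: Dterm_bnd[OF k h])
qed

end

context oppo
begin

lemma CE_D1:
  assumes k: "k \<in> {1..K}" and h: "h \<in> {1..H}"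
  shows "AE w in M. real_cond_exp M (FG k (h - 1) 2) (D1 P H R Pol Q X A k h) w = 0"
proof -
  let ?G = "FG k (h - 1) 2"
  have sub: "subalgebra M ?G" by (rule FG_subalg[OF k]) (use h in auto)
  interpret sigma_finite_subalgebra M ?G by (rule subalg_prob[OF M sub])
  interpret P: prob_space M by (rule M)
  have GS: "sets (FG k 0 2) \<subseteq> sets ?G"
  proof (cases "h = 1")
    case False
    then have "1 \<le> h - 1" using h by auto
    then show ?thesis by (rule G0_sub)
  qed simp
  have GS2: "space ?G = space M" by simp
  have XG: "X k h \<in> ?G \<rightarrow>\<^sub>M S"
    using X_FG2[OF k, of "h - 1"] h by auto
  define F where "F w b = Q k w h (X k h w) b - Qpi P H (R k w) (Pol k w) h (X k h w) b" for w b
  define J where "J w = Jop (Pol k w) h (\<lambda>y b. Q k w h y b - Qpi P H (R k w) (Pol k w) h y b) (X k h w)" for w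
  have Fm: "(\<lambda>w. F w b) \<in> borel_measurable ?G" for b
    unfolding F_def using compose_G0[OF FF_J[OF k h] GS GS2 XG] by simp
  have Fb: "\<bar>F w b\<bar> \<le> 1 + 2 * real H" if "w \<in> space M" for w b
    unfolding F_def by (rule FF_bnd[OF k h that X_space[OF k h that]])
  have Jm: "J \<in> borel_measurable ?G"
  proof -
    have JJ: "(\<lambda>(w,y). Jop (Pol k w) h (\<lambda>y b. Q k w h y b - Qpi P H (R k w) (Pol k w) h y b) y)
        \<in> borel_measurable (FG k 0 2 \<Otimes>\<^sub>M S)"
      by (rule Jop_J[where pol="Pol k" and F="\<lambda>w y b. Q k w h y b - Qpi P H (R k w) (Pol k w) h y b"])
         (simp_all add: Pi_joint[OF k h] FF_J[OF k h])
    show ?thesis unfolding J_def using compose_G0[OF JJ GS GS2 XG] by simp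
  qed
  have Jb: "\<bar>J w\<bar> \<le> 1 + 2 * real H" if "w \<in> space M" for w
    unfolding J_def by (rule Jop_bnd) (rule FF_bnd[OF k h that X_space[OF k h that]])
  have indm: "(\<lambda>w. indicator {b} (A k h w) :: real) \<in> borel_measurable M" for b
    by (rule measurable_compose[OF A_meas[OF k h]]) simp
  have Fm': "(\<lambda>w. F w b) \<in> borel_measurable M" for b
    by (rule measurable_from_subalg[OF sub Fm])
  have intFI: "integrable M (\<lambda>w. F w b * indicator {b} (A k h w))" for b
  proof (rule P.integrable_const_bound[where B="1 + 2 * real H"])
    show "AE w in M. norm (F w b * indicator {b} (A k h w)) \<le> 1 + 2 * real H"
      by (rule AE_I2) (use Fb in \<open>auto simp: indicator_def\<close>)
  qed (use Fm' indm in measurable)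
  have intJ: "integrable M J"
    by (rule P.integrable_const_bound[where B="1 + 2 * real H"])
       (use Jb measurable_from_subalg[OF sub Jm] in auto)
  have intS: "integrable M (\<lambda>w. \<Sum>b\<in>UNIV. F w b * indicator {b} (A k h w))"
    by (intro Bochner_Integration.integrable_sum intFI)
  have eqD: "D1 P H R Pol Q X A k h = (\<lambda>w. J w - (\<Sum>b\<in>UNIV. F w b * indicator {b} (A k h w)))"
    unfolding D1_eq J_def F_def sum_indicator_single ..
  have ae1: "AE w in M. real_cond_exp M ?G (D1 P H R Pol Q X A k h) w
      = real_cond_exp M ?G J w - real_cond_exp M ?G (\<lambda>w. \<Sum>b\<in>UNIV. F w b * indicator {b} (A k h w)) w"
    unfolding eqD by (rule real_cond_exp_diff[OF intJ intS])
  have ae2: "AE w in M. real_cond_exp M ?G J w = J w"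
    by (rule real_cond_exp_F_meas[OF intJ Jm])
  have ae3: "AE w in M. real_cond_exp M ?G (\<lambda>w. \<Sum>b\<in>UNIV. F w b * indicator {b} (A k h w)) w
      = (\<Sum>b\<in>UNIV. real_cond_exp M ?G (\<lambda>w. F w b * indicator {b} (A k h w)) w)"
    by (rule real_cond_exp_sum[OF intFI])
  have ae4: "AE w in M. \<forall>b\<in>UNIV. real_cond_exp M ?G (\<lambda>w. F w b * indicator {b} (A k h w)) w
      = F w b * pmf (Pol k w h (X k h w)) b"
  proof (subst AE_finite_all, simp, intro ballI)
    fix b :: 'a
    have a: "AE w in M. real_cond_exp M ?G (\<lambda>w. F w b * indicator {b} (A k h w)) w
        = F w b * real_cond_exp M ?G (\<lambda>w. indicator {b} (A k h w)) w"
      by (rule real_cond_exp_mult[OF Fm indm intFI])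
    have b: "AE w in M. real_cond_exp M ?G (\<lambda>w. indicator {b} (A k h w)) w = pmf (Pol k w h (X k h w)) b"
      by (rule act[OF k h])
    show "AE w in M. real_cond_exp M ?G (\<lambda>w. F w b * indicator {b} (A k h w)) w
        = F w b * pmf (Pol k w h (X k h w)) b"
      using a b by eventually_elim simp
  qed
  have JF: "J w = (\<Sum>b\<in>UNIV. F w b * pmf (Pol k w h (X k h w)) b)" for w
    unfolding J_def F_def Jop_def by (simp add: mult.commute)
  show ?thesis
    using ae1 ae2 ae3 ae4 by eventually_elim (simp add: JF)
qed

lemma CE_D2:
  assumes k: "k \<in> {1..K}" and h: "h \<in> {1..<H}"
  shows "AE w in M. real_cond_exp M (FG k h 1) (D2 P H R Pol Q X A k h) w = 0"
proof -
  let ?G = "FG k h 1"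
  have h1: "h \<in> {1..H}" "1 \<le> h" "h < H" "Suc h \<in> {1..H}" using h by auto
  have sub: "subalgebra M ?G" by (rule FG_subalg[OF k]) (use h in auto)
  interpret sigma_finite_subalgebra M ?G by (rule subalg_prob[OF M sub])
  interpret P: prob_space M by (rule M)
  have GS: "sets (FG k 0 2) \<subseteq> sets ?G" by (rule G0_sub[OF h1(2)])
  have GS2: "space ?G = space M" by simp
  have XG: "X k h \<in> ?G \<rightarrow>\<^sub>M S" by (rule X_FG[OF k]) (use h in auto)
  have AG: "A k h \<in> ?G \<rightarrow>\<^sub>M count_space UNIV" by (rule A_FG) (use h in auto)
  define g where "g w y = Vest H (Pol k w) (Q k w) (Suc h) y - Vpi P H (R k w) (Pol k w) (Suc h) y" for w y
  have gJ: "(\<lambda>(w,y). g w y) \<in> borel_measurable (FG k 0 2 \<Otimes>\<^sub>M S)"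
    unfolding g_def by (rule g_J[OF k])
  have gb: "\<bar>g w y\<bar> \<le> 2 * real H" if "w \<in> space M" "y \<in> space S" for w y
    unfolding g_def by (rule g_bnd[OF k that])
  define g' where "g' z = (if fst z \<in> space M \<and> snd z \<in> space S then g (fst z) (snd z) else 0)" for z
  have g'm: "g' \<in> borel_measurable (?G \<Otimes>\<^sub>M S)"
  proof -
    have "(\<lambda>z. (fst z, snd z)) \<in> ?G \<Otimes>\<^sub>M S \<rightarrow>\<^sub>M FG k 0 2 \<Otimes>\<^sub>M S"
      by (rule measurable_Pair[OF measurable_compose[OF measurable_fst id_meas_sets[OF GS]] measurable_snd]) simp
    from measurable_compose[OF this gJ]
    have "(\<lambda>z. g (fst z) (snd z)) \<in> borel_measurable (?G \<Otimes>\<^sub>M S)" by (simp add: case_prod_beta')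
    then show ?thesis
      by (rule measurable_cong[THEN iffD1, rotated]) (auto simp: g'_def space_pair_measure)
  qed
  have g'b: "\<forall>z. \<bar>g' z\<bar> \<le> 2 * real H"
    using gb by (auto simp: g'_def)
  have TR: "AE w in M. real_cond_exp M ?G (\<lambda>w. g' (w, X k (Suc h) w)) w
      = (\<integral>y. g' (w, y) \<partial>(P h (X k h w) (A k h w)))"
    by (rule trans[OF k h g'm g'b])
  define U where "U w = Pop P h (g w) (X k h w) (A k h w)" for w
  define V where "V w = g' (w, X k (Suc h) w)" for w
  have Um: "U \<in> borel_measurable ?G"
  proof -
    have PJ: "(\<lambda>(w,x). Pop P h (g w) x b) \<in> borel_measurable (FG k 0 2 \<Otimes>\<^sub>M S)" for b
      by (rule Pop_joint[OF h1(1) gJ, where B="2 * real H"]) (use gb in auto)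
    show ?thesis
      unfolding U_def
      using measurable_compose_countable[where f="\<lambda>i w. Pop P h (g w) (X k h w) i"
        and g="A k h", OF compose_G0[OF PJ GS GS2 XG] AG] by simp
  qed
  have Ub: "\<bar>U w\<bar> \<le> 2 * real H" if w: "w \<in> space M" for w
  proof -
    have sm: "g w \<in> borel_measurable S"
      using measurable_Pair2[OF gJ, of w] w by simp
    show ?thesis unfolding U_def
      by (rule Pop_bnd[OF h1(1) X_space[OF k h1(1) w] sm]) (rule gb[OF w])
  qed
  have Vm: "V \<in> borel_measurable M"
  proof -
    have "(\<lambda>w. (w, X k (Suc h) w)) \<in> M \<rightarrow>\<^sub>M ?G \<Otimes>\<^sub>M S"
      by (rule measurable_Pair[OF id_meas_sets X_meas[OF k h1(4)]]) (use sub in \<open>auto simp: subalgebra_def\<close>)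
    from measurable_compose[OF this g'm] show ?thesis unfolding V_def by simp
  qed
  have intU: "integrable M U"
    by (rule P.integrable_const_bound[where B="2 * real H"])
       (use Ub measurable_from_subalg[OF sub Um] in auto)
  have intV: "integrable M V"
    by (rule P.integrable_const_bound[where B="2 * real H"]) (use g'b Vm in \<open>auto simp: V_def intro!: AE_I2\<close>)
  have D2m: "D2 P H R Pol Q X A k h \<in> borel_measurable M"
  proof -
    have "subalgebra M (FG k h 2)" by (rule FG_subalg[OF k]) (use h in auto)
    then show ?thesis by (rule measurable_from_subalg[OF _ D2_meas[OF k h]])
  qed
  have eqD: "D2 P H R Pol Q X A k h w = U w - V w" if w: "w \<in> space M" for w
    using X_space[OF k h1(4) w] w unfolding D2_eq U_def V_def g'_def g_def by simp
  have ae1: "AE w in M. real_cond_exp M ?G (D2 P H R Pol Q X A k h) w = real_cond_exp M ?G (\<lambda>w. U w - V w) w"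
    by (rule real_cond_exp_cong[OF AE_I2[OF eqD] D2m]) (use measurable_from_subalg[OF sub Um] Vm in auto)
  have ae2: "AE w in M. real_cond_exp M ?G (\<lambda>w. U w - V w) w = real_cond_exp M ?G U w - real_cond_exp M ?G V w"
    by (rule real_cond_exp_diff[OF intU intV])
  have ae3: "AE w in M. real_cond_exp M ?G U w = U w"
    by (rule real_cond_exp_F_meas[OF intU Um])
  have ae4: "AE w in M. real_cond_exp M ?G V w = U w"
    using AE_space TR
  proof eventually_elim
    case (elim w)
    have x: "X k h w \<in> space S" by (rule X_space[OF k h1(1) elim(1)])
    have "(\<integral>y. g' (w, y) \<partial>(P h (X k h w) (A k h w))) = U w"
      unfolding U_def Pop_def
      by (rule Bochner_Integration.integral_cong) (use elim(1) in \<open>auto simp: g'_def P_sets[OF h1(1) x]\<close>)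
    then show ?case using elim(2) unfolding V_def by simp
  qed
  show ?thesis using ae1 ae2 ae3 ae4 by eventually_elim simp
qed

end

definition "decK H t = (t - 1) div (2 * H) + (1::nat)"
definition "decH H t = ((t - 1) mod (2 * H)) div 2 + (1::nat)"
definition "decM t = (t - 1) mod 2 + (1::nat)"

lemma Ft_dec: "Ft M S H R X A t = Fgen M S H R X A (decK H t) (decH H t) (decM t)"
  by (simp add: Ft_def decK_def decH_def decM_def)

lemma tidx_dec:
  assumes H: "1 \<le> H" and t: "1 \<le> t"
  shows "tidx H (decK H t) (decH H t) (decM t) = t"
proof -
  define u where "u = t - 1"
  have m2: "u mod (2 * H) mod 2 = u mod 2" by (rule mod_mod_cancel) simp
  have "tidx H (decK H t) (decH H t) (decM t) = u div (2*H) * (2*H) + ((u mod (2*H)) div 2 * 2 + (u mod (2*H)) mod 2) + 1"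
    unfolding tidx_def decK_def decH_def decM_def u_def[symmetric] m2 by simp
  also have "\<dots> = u div (2*H) * (2*H) + u mod (2*H) + 1" by simp
  also have "\<dots> = u + 1" by (simp only: div_mult_mod_eq)
  also have "\<dots> = t" unfolding u_def using t by simp
  finally show ?thesis .
qed

lemma dec_tidx:
  assumes H: "1 \<le> H" and k: "1 \<le> k" and h: "h \<in> {1..H}" and m: "m \<in> {1..2}"
  shows "decK H (tidx H k h m) = k" "decH H (tidx H k h m) = h" "decM (tidx H k h m) = m"
proof -
  define r where "r = (m - 1) + (h - 1) * 2"
  have r: "r < 2 * H" using h m unfolding r_def by auto
  have u: "tidx H k h m - 1 = r + (k - 1) * (2 * H)" unfolding tidx_def r_def using m by auto
  have d: "(r + (k - 1) * (2 * H)) div (2 * H) = k - 1"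
  proof -
    have "(r + (k - 1) * (2 * H)) div (2 * H) = (k - 1) + r div (2 * H)"
      by (rule div_mult_self1) (use H in simp)
    also have "r div (2 * H) = 0" by (rule div_less[OF r])
    finally show ?thesis by simp
  qed
  have md: "(r + (k - 1) * (2 * H)) mod (2 * H) = r"
  proof -
    have "(r + (k - 1) * (2 * H)) mod (2 * H) = r mod (2 * H)" by (rule mod_mult_self1)
    also have "\<dots> = r" by (rule mod_less[OF r])
    finally show ?thesis .
  qed
  have r2a: "r div 2 = h - 1"
  proof (cases "m = 1")
    case True then show ?thesis unfolding r_def by simp
  next
    case False then have "m = 2" using m by auto
    then show ?thesis unfolding r_def by simp
  qed
  have r2b: "r mod 2 = m - 1"
  proof (cases "m = 1")
    case True then show ?thesis unfolding r_def by simp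
  next
    case False then have "m = 2" using m by auto
    then show ?thesis unfolding r_def by simp presburger
  qed
  have m2: "(r + (k - 1) * (2 * H)) mod 2 = m - 1"
  proof -
    have e: "(k - 1) * (2 * H) = ((k - 1) * H) * 2" by simp
    have "(r + (k - 1) * (2 * H)) mod 2 = r mod 2" unfolding e by (rule mod_mult_self1)
    then show ?thesis using r2b by simp
  qed
  show "decK H (tidx H k h m) = k" unfolding decK_def u d using k by simp
  show "decH H (tidx H k h m) = h" unfolding decH_def u md r2a using h by simp
  show "decM (tidx H k h m) = m" unfolding decM_def u m2 using m by simp
qed

lemma dec_range:
  assumes H: "1 \<le> H" and t: "t \<in> {1..2 * H * K}"
  shows "decK H t \<in> {1..K}" "decH H t \<in> {1..H}" "decM t \<in> {1..2}"
proof -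
  have "t - 1 < K * (2 * H)" using t by (auto simp: mult.commute mult.left_commute)
  then have "(t - 1) div (2 * H) < K" by (rule less_mult_imp_div_less)
  then show "decK H t \<in> {1..K}" unfolding decK_def by auto
  have "(t - 1) mod (2 * H) < H * 2" using H by (simp add: mult.commute)
  then have "(t - 1) mod (2 * H) div 2 < H" by (rule less_mult_imp_div_less)
  then show "decH H t \<in> {1..H}" unfolding decH_def by auto
  show "decM t \<in> {1..2}" unfolding decM_def by auto
qed

lemma tidx_pos: "1 \<le> m \<Longrightarrow> 1 \<le> tidx H k h m"
  by (simp add: tidx_def)

lemma tidx_inj:
  assumes H: "1 \<le> H" and z: "(k, h, m) \<in> {1..K} \<times> {1..H} \<times> {1..2::nat}"
    and z': "(k', h', m') \<in> {1..K} \<times> {1..H} \<times> {1..2::nat}"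
    and eq: "tidx H k h m = tidx H k' h' m'"
  shows "(k, h, m) = (k', h', m')"
  using dec_tidx[OF H, of k h m] dec_tidx[OF H, of k' h' m'] z z' eq by auto

lemma tidx_mono_le:
  assumes "k \<le> K" "1 \<le> k" "h \<le> H" "1 \<le> h" "m \<le> 2"
  shows "tidx H k h m \<le> tidx H K H 2"
proof -
  have "(k - 1) * (2 * H) \<le> (K - 1) * (2 * H)" using assms by (intro mult_right_mono) auto
  moreover have "(h - 1) * 2 + m \<le> (H - 1) * 2 + 2" using assms by auto
  ultimately show ?thesis unfolding tidx_def by linarith
qed

context oppo
begin

lemma Ft_tidx:
  assumes H: "1 \<le> H" and k: "1 \<le> k" and h: "h \<in> {1..H}" and m: "m \<in> {1..2}"
  shows "Ft M S H R X A (tidx H k h m) = FG k h m"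
  unfolding Ft_dec dec_tidx[OF H k h m] ..

lemma tidx_wrap:
  assumes H: "1 \<le> H" and k: "1 \<le> k"
  shows "Suc (tidx H k H 2) = tidx H (Suc k) 1 1"
proof -
  obtain k' where k': "k = Suc k'" using k by (cases k) auto
  obtain H' where H': "H = Suc H'" using H by (cases H) auto
  show ?thesis unfolding tidx_def k' H' by (simp add: algebra_simps)
qed

lemma Ft_Suc_mono:
  assumes H: "1 \<le> H" and t: "t \<in> {1..<2 * H * K}"
  shows "sets (Ft M S H R X A t) \<subseteq> sets (Ft M S H R X A (Suc t))"
proof -
  define k h m where "k = decK H t" and "h = decH H t" and "m = decM t"
  have t1: "t \<in> {1..2 * H * K}" using t by auto
  have rg: "k \<in> {1..K}" "h \<in> {1..H}" "m \<in> {1..2}"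
    using dec_range[OF H t1] unfolding k_def h_def m_def by auto
  have k1: "1 \<le> k" using rg by auto
  have tt: "t = tidx H k h m" unfolding k_def h_def m_def using tidx_dec[OF H] t by auto
  have e1: "Ft M S H R X A t = FG k h m" unfolding tt by (rule Ft_tidx[OF H k1 rg(2,3)])
  show ?thesis
  proof (cases "m = 1")
    case True
    have "Suc t = tidx H k h 2" using tt True by (simp add: tidx_def)
    then have e2: "Ft M S H R X A (Suc t) = FG k h 2" using Ft_tidx[OF H k1 rg(2)] by simp
    show ?thesis unfolding e1 e2 True by (rule Fgen_mono[OF Fgens_12])
  next
    case False
    then have m2: "m = 2" using rg by auto
    show ?thesis
    proof (cases "h < H")
      case True
      have "Suc t = tidx H k (Suc h) 1" using tt m2 rg(2) by (simp add: tidx_def) (cases h; simp)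
      moreover have "Suc h \<in> {1..H}" using True by auto
      ultimately have e2: "Ft M S H R X A (Suc t) = FG k (Suc h) 1" using Ft_tidx[OF H k1] by simp
      show ?thesis unfolding e1 e2 m2 by (rule Fgen_mono[OF Fgens_2S[OF True]])
    next
      case False
      then have hH: "h = H" using rg by auto
      have "Suc t = tidx H (Suc k) 1 1" unfolding tt m2 hH by (rule tidx_wrap[OF H k1])
      moreover have "1 \<in> {1..H}" using H by auto
      ultimately have e2: "Ft M S H R X A (Suc t) = FG (Suc k) 1 1" using Ft_tidx[OF H] by simp
      show ?thesis unfolding e1 e2 m2 hH by (rule Fgen_mono[OF Fgens_Hk[OF k1]])
    qed
  qed
qed

lemma Ft_mono:
  assumes H: "1 \<le> H" and st: "s \<le> t" and s: "1 \<le> s" and t: "t \<le> 2 * H * K"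
  shows "sets (Ft M S H R X A s) \<subseteq> sets (Ft M S H R X A t)"
  using st t
proof (induction t rule: dec_induct)
  case base
  then show ?case by simp
next
  case (step n)
  have "sets (Ft M S H R X A n) \<subseteq> sets (Ft M S H R X A (Suc n))"
    by (rule Ft_Suc_mono[OF H]) (use step s in auto)
  then show ?case using step by auto
qed

end

context oppo
begin

lemma CE_prev:
  assumes H1: "1 \<le> H" and z: "(k, h, m) \<in> {1..K} \<times> {1..H} \<times> {1..2::nat}"
    and t2: "2 \<le> tidx H k h m"
  shows "AE w in M. real_cond_exp M (Ft M S H R X A (tidx H k h m - 1)) (Dterm P H R Pol Q X A k h m) w = 0"
proof -
  have k: "k \<in> {1..K}" and h: "h \<in> {1..H}" and m: "m \<in> {1..2}" using z by auto
  have k1: "1 \<le> k" using k by auto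
  interpret P: prob_space M by (rule M)
  have zero: "AE w in M. real_cond_exp M F (\<lambda>w. 0) w = 0" if "subalgebra M F" for F
  proof -
    interpret sigma_finite_subalgebra M F by (rule subalg_prob[OF M that])
    show ?thesis by (rule real_cond_exp_F_meas) auto
  qed
  show ?thesis
  proof (cases "m = 2")
    case True
    have e: "tidx H k h m - 1 = tidx H k h 1" unfolding True by (simp add: tidx_def)
    have F: "Ft M S H R X A (tidx H k h m - 1) = FG k h 1" unfolding e by (rule Ft_tidx[OF H1 k1 h]) simp
    show ?thesis
    proof (cases "h < H")
      case True
      then have "h \<in> {1..<H}" using h by auto
      then have c: "AE w in M. real_cond_exp M (FG k h 1) (D2 P H R Pol Q X A k h) w = 0" by (rule CE_D2[OF k])
      have d: "Dterm P H R Pol Q X A k h m = D2 P H R Pol Q X A k h" using \<open>m = 2\<close> Dterm_2 by simp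
      show ?thesis unfolding F d by (rule c)
    next
      case False
      then have "h = H" using h by auto
      then have "D2 P H R Pol Q X A k h = (\<lambda>w. 0)" by (intro ext) (simp add: D2_H)
      moreover have "subalgebra M (FG k h 1)" by (rule FG_subalg[OF k]) (use h in auto)
      moreover have "Dterm P H R Pol Q X A k h m = D2 P H R Pol Q X A k h" using \<open>m = 2\<close> Dterm_2 by simp
      ultimately show ?thesis unfolding F using zero by simp
    qed
  next
    case False
    then have m1: "m = 1" using m by auto
    show ?thesis
    proof (cases "2 \<le> h")
      case True
      have e: "tidx H k h m - 1 = tidx H k (h - 1) 2" unfolding m1 tidx_def using True by (cases h) auto
      have F: "Ft M S H R X A (tidx H k h m - 1) = FG k (h - 1) 2"
        unfolding e by (rule Ft_tidx[OF H1 k1]) (use True h in auto)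
      have d: "Dterm P H R Pol Q X A k h m = D1 P H R Pol Q X A k h" unfolding m1 by (rule Dterm_1)
      show ?thesis unfolding F d by (rule CE_D1[OF k h])
    next
      case False
      then have h1: "h = 1" using h by auto
      have k2: "2 \<le> k"
      proof (rule ccontr)
        assume "\<not> 2 \<le> k"
        then have "k = 1" using k by auto
        then show False using t2 m1 h1 by (simp add: tidx_def)
      qed
      have kk: "1 \<le> k - 1" "Suc (k - 1) = k" using k2 by auto
      have e: "tidx H k h m - 1 = tidx H (k - 1) H 2"
        using tidx_wrap[OF H1 kk(1)] unfolding kk(2) m1 h1 by simp
      have F: "Ft M S H R X A (tidx H k h m - 1) = FG (k - 1) H 2"
        unfolding e by (rule Ft_tidx[OF H1 kk(1)]) (use H1 in auto)
      let ?F = "FG (k - 1) H 2" and ?G = "FG k 0 2"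
      have kK: "k - 1 \<in> {1..K}" using k kk by auto
      have subF: "subalgebra M ?F" by (rule FG_subalg[OF kK]) simp
      have subG: "subalgebra M ?G" by (rule FG_subalg[OF k]) simp
      have subGF: "subalgebra ?G ?F"
        unfolding subalgebra_def using Fgen_mono[OF Fgens_prev[OF k2]] by simp
      interpret F: sigma_finite_subalgebra M ?F by (rule subalg_prob[OF M subF])
      interpret G: sigma_finite_subalgebra M ?G by (rule subalg_prob[OF M subG])
      have intD: "integrable M (D1 P H R Pol Q X A k h)"
        using Dterm_int[OF k h m] unfolding m1 Dterm_1[of P H R Pol Q X A k h] .
      have ae1: "AE w in M. real_cond_exp M ?F (real_cond_exp M ?G (D1 P H R Pol Q X A k h)) w
          = real_cond_exp M ?F (D1 P H R Pol Q X A k h) w"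
        by (rule F.real_cond_exp_nested_subalg[OF subG subGF intD])
      have ae2: "AE w in M. real_cond_exp M ?G (D1 P H R Pol Q X A k h) w = 0"
        using CE_D1[OF k h] unfolding h1 by simp
      have ae3: "AE w in M. real_cond_exp M ?F (real_cond_exp M ?G (D1 P H R Pol Q X A k h)) w
          = real_cond_exp M ?F (\<lambda>w. 0) w"
        by (rule F.real_cond_exp_cong[OF ae2]) auto
      have ae4: "AE w in M. real_cond_exp M ?F (\<lambda>w. 0) w = 0" by (rule zero[OF subF])
      have d: "Dterm P H R Pol Q X A k h m = D1 P H R Pol Q X A k h" unfolding m1 by (rule Dterm_1)
      show ?thesis unfolding F d using ae1 ae3 ae4 by eventually_elim simp
    qed
  qed
qed

lemma Mart_eq: "Mart P H K R Pol Q X A t = (\<lambda>w. \<Sum>z\<in>{z \<in> {1..K} \<times> {1..H} \<times> {1..2::nat}.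
     case z of (k, h, m) \<Rightarrow> tidx H k h m \<le> t}. case z of (k, h, m) \<Rightarrow> Dterm P H R Pol Q X A k h m w)"
  by (rule ext) (simp add: Mart_def case_prod_beta')

lemma martingale: "is_martingale M (Ft M S H R X A) (Mart P H K R Pol Q X A) (2 * H * K)"
proof (cases "H = 0")
  case True
  then show ?thesis by (simp add: is_martingale_def)
next
  case False
  then have H1: "1 \<le> H" by auto
  interpret P: prob_space M by (rule M)
  define I where "I = {1..K} \<times> {1..H} \<times> {1..2::nat}"
  define Z where "Z t = {z \<in> I. case z of (k, h, m) \<Rightarrow> tidx H k h m \<le> t}" for t
  define DD where "DD z w = (case z of (k, h, m) \<Rightarrow> Dterm P H R Pol Q X A k h m w)" for z w
  have ME: "Mart P H K R Pol Q X A t = (\<lambda>w. \<Sum>z\<in>Z t. DD z w)" for t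
    unfolding Mart_eq Z_def I_def DD_def ..
  have finI: "finite I" unfolding I_def by auto
  have finZ: "finite (Z t)" for t using finI unfolding Z_def by auto
  have sub: "subalgebra M (Ft M S H R X A t)" if t: "t \<in> {1..2 * H * K}" for t
    unfolding Ft_dec using dec_range[OF H1 t] by (intro FG_subalg) auto
  have space_Ft: "space (Ft M S H R X A t) = space M" for t unfolding Ft_dec by simp
  have DDm: "(\<lambda>w. DD z w) \<in> borel_measurable (Ft M S H R X A t)"
    if t: "t \<in> {1..2 * H * K}" and z: "z \<in> Z t" for t z
  proof -
    obtain k h m where zz: "z = (k, h, m)" by (cases z) auto
    have zI: "(k, h, m) \<in> I" and le: "tidx H k h m \<le> t" using z unfolding Z_def zz by auto
    then have k: "k \<in> {1..K}" and h: "h \<in> {1..H}" and m: "m \<in> {1..2}" unfolding I_def by auto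
    have "sets (Ft M S H R X A (tidx H k h m)) \<subseteq> sets (Ft M S H R X A t)"
      by (rule Ft_mono[OF H1 le]) (use t m in \<open>auto simp: tidx_def\<close>)
    moreover have "1 \<le> k" using k by auto
    ultimately have "subalgebra (Ft M S H R X A t) (FG k h m)"
      unfolding subalgebra_def using Ft_tidx[OF H1 _ h m] by (simp add: space_Ft)
    from measurable_from_subalg[OF this Dterm_meas[OF k h m]]
    show ?thesis unfolding DD_def zz by simp
  qed
  have DDi: "integrable M (\<lambda>w. DD z w)" if z: "z \<in> I" for z
  proof -
    obtain k h m where zz: "z = (k, h, m)" by (cases z) auto
    have k: "k \<in> {1..K}" and h: "h \<in> {1..H}" and m: "m \<in> {1..2}" using z unfolding I_def zz by auto
    show ?thesis unfolding DD_def zz using Dterm_int[OF k h m] by simp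
  qed
  have Mm: "Mart P H K R Pol Q X A t \<in> borel_measurable (Ft M S H R X A t)" if t: "t \<in> {1..2 * H * K}" for t
    unfolding ME by (rule borel_measurable_sum) (rule DDm[OF t])
  have Mi: "integrable M (Mart P H K R Pol Q X A t)" for t
    unfolding ME by (rule Bochner_Integration.integrable_sum) (use DDi in \<open>auto simp: Z_def\<close>)
  have CE: "AE w in M. real_cond_exp M (Ft M S H R X A t) (Mart P H K R Pol Q X A (Suc t)) w
      = Mart P H K R Pol Q X A t w" if t: "t \<in> {1..<2 * H * K}" for t
  proof -
    have st: "Suc t \<in> {1..2 * H * K}" using t by auto
    define k0 h0 m0 where "k0 = decK H (Suc t)" and "h0 = decH H (Suc t)" and "m0 = decM (Suc t)"
    have rg: "k0 \<in> {1..K}" "h0 \<in> {1..H}" "m0 \<in> {1..2}"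
      using dec_range[OF H1 st] unfolding k0_def h0_def m0_def by auto
    have z0I: "(k0, h0, m0) \<in> I" using rg unfolding I_def by auto
    have tz: "tidx H k0 h0 m0 = Suc t" unfolding k0_def h0_def m0_def by (rule tidx_dec[OF H1]) simp
    have ZS: "Z (Suc t) = insert (k0, h0, m0) (Z t)"
    proof (intro equalityI subsetI)
      fix z assume z: "z \<in> Z (Suc t)"
      obtain k h m where zz: "z = (k, h, m)" by (cases z) auto
      have zI: "(k, h, m) \<in> I" and le: "tidx H k h m \<le> Suc t" using z unfolding Z_def zz by auto
      show "z \<in> insert (k0, h0, m0) (Z t)"
      proof (cases "tidx H k h m = Suc t")
        case True
        then have "(k, h, m) = (k0, h0, m0)"
          using tidx_inj[OF H1 zI[unfolded I_def] z0I[unfolded I_def]] tz by simp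
        then show ?thesis unfolding zz by simp
      next
        case False
        then show ?thesis using zI le unfolding zz Z_def by auto
      qed
    next
      fix z assume "z \<in> insert (k0, h0, m0) (Z t)"
      then show "z \<in> Z (Suc t)" using z0I tz unfolding Z_def by auto
    qed
    have notin: "(k0, h0, m0) \<notin> Z t" using tz unfolding Z_def by auto
    have MS: "Mart P H K R Pol Q X A (Suc t) = (\<lambda>w. Mart P H K R Pol Q X A t w + Dterm P H R Pol Q X A k0 h0 m0 w)"
      unfolding ME ZS using finZ notin by (simp add: DD_def add.commute)
    have tt: "t = tidx H k0 h0 m0 - 1" using tz by simp
    have t1: "t \<in> {1..2 * H * K}" using t by auto
    interpret sigma_finite_subalgebra M "Ft M S H R X A t" by (rule subalg_prob[OF M sub[OF t1]])
    have ae1: "AE w in M. real_cond_exp M (Ft M S H R X A t) (Mart P H K R Pol Q X A (Suc t)) w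
        = real_cond_exp M (Ft M S H R X A t) (Mart P H K R Pol Q X A t) w
          + real_cond_exp M (Ft M S H R X A t) (Dterm P H R Pol Q X A k0 h0 m0) w"
      unfolding MS by (rule real_cond_exp_add[OF Mi Dterm_int[OF rg]])
    have ae2: "AE w in M. real_cond_exp M (Ft M S H R X A t) (Mart P H K R Pol Q X A t) w
        = Mart P H K R Pol Q X A t w"
      by (rule real_cond_exp_F_meas[OF Mi Mm[OF t1]])
    have ae3: "AE w in M. real_cond_exp M (Ft M S H R X A t) (Dterm P H R Pol Q X A k0 h0 m0) w = 0"
      unfolding tt by (rule CE_prev[OF H1]) (use rg tz t in auto)
    show ?thesis using ae1 ae2 ae3 by eventually_elim simp
  qed
  show ?thesis
    unfolding is_martingale_def using sub Mm Mi Ft_Suc_mono[OF H1] CE by auto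
qed

end

context oppo
begin

lemma episode_identity:
  assumes k: "k \<in> {1..K}" and w: "w \<in> space M" and ps: "ps \<in> policies S"
  shows "Vpi P H (R k w) ps 1 (X k 1 w) - Vpi P H (R k w) (Pol k w) 1 (X k 1 w)
     = (\<Sum>h=1..H. Epi P ps h (\<lambda>y b. \<Sum>c\<in>UNIV. (pmf (ps h y) c - pmf (Pol k w h y) c) * Q k w h y c) (X k 1 w))
       + (\<Sum>h=1..H. D1 P H R Pol Q X A k h w + D2 P H R Pol Q X A k h w)
       + (\<Sum>h=1..H. Epi P ps h (iota P H (R k w) (Pol k w) (Q k w) h) (X k 1 w)
           - iota P H (R k w) (Pol k w) (Q k w) h (X k h w) (A k h w))"
proof -
  have wG: "w \<in> space (FG k 0 2)" using w by simp
  have pkm: "(\<lambda>x. pmf (Pol k w h x) b) \<in> borel_measurable S" if h: "h \<in> {1..H}" for h b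
    using measurable_Pair2[OF Pi_joint[OF k h] wG] by simp
  have rm: "(\<lambda>x. R k w h x b) \<in> borel_measurable S" if h: "h \<in> {1..H}" for h b
    using measurable_Pair2[OF R_joint[OF k h] wG] by simp
  have rb: "\<bar>R k w h x b\<bar> \<le> 1" if h: "h \<in> {1..H}" and x: "x \<in> space S" for h b x
    by (rule R_bnd[OF k h w x])
  have Q2: "bmb2 S (Q k w h)" if h: "h \<in> {1..H}" for h
    unfolding bmb2_def using measurable_Pair2[OF Q_joint[OF k h] wG] Q_bnd[OF k h w] by auto
  have r2: "bmb2 S (R k w h)" if h: "h \<in> {1..H}" for h
    unfolding bmb2_def using rm[OF h] rb[OF h] by blast
  have x: "X k 1 w \<in> space S" using init[OF k w] x1 by simp
  have I1: "Vpi P H (R k w) ps 1 (X k 1 w) - Vest H (Pol k w) (Q k w) 1 (X k 1 w) =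
    (\<Sum>h=1..H. Etg P ps h (\<lambda>y b. fadv ps (Pol k w) (Q k w) h y b + iota P H (R k w) (Pol k w) (Q k w) h y b) (h - 1) (X k 1 w))"
    using ident1_gen[OF ps pkm rm rb Q2, where j=1] x by auto
  also have "\<dots> = (\<Sum>h=1..H. Etg P ps h (fadv ps (Pol k w) (Q k w) h) (h - 1) (X k 1 w))
      + (\<Sum>h=1..H. Etg P ps h (iota P H (R k w) (Pol k w) (Q k w) h) (h - 1) (X k 1 w))"
    unfolding sum.distrib[symmetric]
  proof (rule sum.cong[OF refl])
    fix h assume h: "h \<in> {1..H}"
    show "Etg P ps h (\<lambda>y b. fadv ps (Pol k w) (Q k w) h y b + iota P H (R k w) (Pol k w) (Q k w) h y b) (h - 1) (X k 1 w)
      = Etg P ps h (fadv ps (Pol k w) (Q k w) h) (h - 1) (X k 1 w) + Etg P ps h (iota P H (R k w) (Pol k w) (Q k w) h) (h - 1) (X k 1 w)"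
      by (rule Etg_add[OF ps fadv_bmb2[OF ps pkm Q2 h] iota_bmb2[OF pkm r2 Q2 h]]) (use h x in auto)
  qed
  finally have I1a: "Vpi P H (R k w) ps 1 (X k 1 w) - Vest H (Pol k w) (Q k w) 1 (X k 1 w) =
      (\<Sum>h=1..H. Etg P ps h (fadv ps (Pol k w) (Q k w) h) (h - 1) (X k 1 w))
      + (\<Sum>h=1..H. Etg P ps h (iota P H (R k w) (Pol k w) (Q k w) h) (h - 1) (X k 1 w))" .
  have I1': "Vpi P H (R k w) ps 1 (X k 1 w) - Vest H (Pol k w) (Q k w) 1 (X k 1 w) =
      (\<Sum>h=1..H. Epi P ps h (\<lambda>y b. \<Sum>c\<in>UNIV. (pmf (ps h y) c - pmf (Pol k w h y) c) * Q k w h y c) (X k 1 w))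
      + (\<Sum>h=1..H. Epi P ps h (iota P H (R k w) (Pol k w) (Q k w) h) (X k 1 w))"
  proof -
    have "fadv ps (Pol k w) (Q k w) h = (\<lambda>y b. \<Sum>c\<in>UNIV. (pmf (ps h y) c - pmf (Pol k w h y) c) * Q k w h y c)" for h
      by (intro ext) (simp add: fadv_def)
    then show ?thesis using I1a by (simp add: Epi_def)
  qed
  define \<Delta> where "\<Delta> i = Vest H (Pol k w) (Q k w) i (X k i w) - Vpi P H (R k w) (Pol k w) i (X k i w)" for i
  have step: "D1 P H R Pol Q X A k h w + D2 P H R Pol Q X A k h w
      - iota P H (R k w) (Pol k w) (Q k w) h (X k h w) (A k h w) = \<Delta> h - \<Delta> (Suc h)"
    if h: "h \<in> {1..H}" for h
    unfolding D1_eq D2_eq \<Delta>_def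
    using ident2_step[OF pkm rm rb Q2 h X_space[OF k h w], where a="A k h w" and x'="X k (Suc h) w"] by simp
  have tele: "(\<Sum>h=1..H. \<Delta> (Suc h) - \<Delta> h) = \<Delta> (Suc H) - \<Delta> 1"
    by (rule sum_Suc_diff) simp
  have D0: "\<Delta> (Suc H) = 0" unfolding \<Delta>_def by (simp add: Vest_SucH Vpi_SucH)
  have I2: "\<Delta> 1 = (\<Sum>h=1..H. D1 P H R Pol Q X A k h w + D2 P H R Pol Q X A k h w)
      - (\<Sum>h=1..H. iota P H (R k w) (Pol k w) (Q k w) h (X k h w) (A k h w))"
  proof -
    have "(\<Sum>h=1..H. D1 P H R Pol Q X A k h w + D2 P H R Pol Q X A k h w)
      - (\<Sum>h=1..H. iota P H (R k w) (Pol k w) (Q k w) h (X k h w) (A k h w))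
      = (\<Sum>h=1..H. \<Delta> h - \<Delta> (Suc h))"
      unfolding sum_subtractf[symmetric] by (rule sum.cong[OF refl]) (rule step)
    also have "\<dots> = - (\<Sum>h=1..H. \<Delta> (Suc h) - \<Delta> h)" by (simp add: sum_negf[symmetric])
    finally show ?thesis unfolding tele D0 by simp
  qed
  show ?thesis
    using I1' I2 unfolding \<Delta>_def by (simp add: sum_subtractf)
qed

lemma Mart_full:
  "Mart P H K R Pol Q X A (tidx H K H 2) w
     = (\<Sum>k=1..K. \<Sum>h=1..H. D1 P H R Pol Q X A k h w + D2 P H R Pol Q X A k h w)"
proof -
  let ?I = "{1..K} \<times> {1..H} \<times> {1..2::nat}"
  have Z: "{z \<in> ?I. case z of (k, h, m) \<Rightarrow> tidx H k h m \<le> tidx H K H 2} = ?I"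
    by (auto intro!: tidx_mono_le)
  have "Mart P H K R Pol Q X A (tidx H K H 2) w = (\<Sum>z\<in>?I. case z of (k, h, m) \<Rightarrow> Dterm P H R Pol Q X A k h m w)"
    unfolding Mart_eq Z ..
  also have "\<dots> = (\<Sum>k=1..K. \<Sum>hm\<in>{1..H} \<times> {1..2::nat}. case hm of (h, m) \<Rightarrow> Dterm P H R Pol Q X A k h m w)"
    by (subst sum.cartesian_product) (simp add: case_prod_beta')
  also have "\<dots> = (\<Sum>k=1..K. \<Sum>h=1..H. \<Sum>m\<in>{1..2::nat}. Dterm P H R Pol Q X A k h m w)"
    by (subst sum.cartesian_product) (simp add: case_prod_beta')
  also have "\<dots> = (\<Sum>k=1..K. \<Sum>h=1..H. D1 P H R Pol Q X A k h w + D2 P H R Pol Q X A k h w)"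
  proof -
    have "{1..2::nat} = {1, 2}" by auto
    then show ?thesis by (simp add: Dterm_def)
  qed
  finally show ?thesis .
qed

end

theorem lemma4p2:
  fixes M :: "'w measure" and S :: "'s measure"
    and P :: "nat \<Rightarrow> 's \<Rightarrow> 'a::finite \<Rightarrow> 's measure"
    and H K :: nat and x1 :: 's
    and R :: "nat \<Rightarrow> 'w \<Rightarrow> nat \<Rightarrow> 's \<Rightarrow> 'a \<Rightarrow> real"
    and Pol :: "nat \<Rightarrow> 'w \<Rightarrow> nat \<Rightarrow> 's \<Rightarrow> 'a pmf"
    and Q :: "nat \<Rightarrow> 'w \<Rightarrow> nat \<Rightarrow> 's \<Rightarrow> 'a \<Rightarrow> real"
    and X :: "nat \<Rightarrow> nat \<Rightarrow> 'w \<Rightarrow> 's"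
    and A :: "nat \<Rightarrow> nat \<Rightarrow> 'w \<Rightarrow> 'a"
  assumes M: "prob_space M"
    and kernel_prob: "\<And>h x a. h \<in> {1..H} \<Longrightarrow> x \<in> space S \<Longrightarrow> prob_space (P h x a)"
    and kernel_meas: "\<And>h a. h \<in> {1..H} \<Longrightarrow> (\<lambda>x. P h x a) \<in> S \<rightarrow>\<^sub>M subprob_algebra S"
    and x1: "x1 \<in> space S"
    and init: "\<And>k w. k \<in> {1..K} \<Longrightarrow> w \<in> space M \<Longrightarrow> X k 1 w = x1"
    and X_meas: "\<And>k h. k \<in> {1..K} \<Longrightarrow> h \<in> {1..H} \<Longrightarrow> X k h \<in> M \<rightarrow>\<^sub>M S"
    and A_meas: "\<And>k h. k \<in> {1..K} \<Longrightarrow> h \<in> {1..H} \<Longrightarrow> A k h \<in> M \<rightarrow>\<^sub>M count_space UNIV"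
    and R_meas: "\<And>k h x a. k \<in> {1..K} \<Longrightarrow> h \<in> {1..H} \<Longrightarrow> x \<in> space S \<Longrightarrow>
                   (\<lambda>w. R k w h x a) \<in> borel_measurable M"
    and R_joint: "\<And>k h a. k \<in> {1..K} \<Longrightarrow> h \<in> {1..H} \<Longrightarrow>
                   (\<lambda>(w, x). R k w h x a) \<in> borel_measurable (Fgen M S H R X A k 0 2 \<Otimes>\<^sub>M S)"
    and R_range: "\<And>k h w x a. k \<in> {1..K} \<Longrightarrow> h \<in> {1..H} \<Longrightarrow> w \<in> space M \<Longrightarrow> x \<in> space S \<Longrightarrow>
                   0 \<le> R k w h x a \<and> R k w h x a \<le> 1"
    and Pi_joint: "\<And>k h a. k \<in> {1..K} \<Longrightarrow> h \<in> {1..H} \<Longrightarrow>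
                   (\<lambda>(w, x). pmf (Pol k w h x) a) \<in> borel_measurable (Fgen M S H R X A k 0 2 \<Otimes>\<^sub>M S)"
    and Q_joint: "\<And>k h a. k \<in> {1..K} \<Longrightarrow> h \<in> {1..H} \<Longrightarrow>
                   (\<lambda>(w, x). Q k w h x a) \<in> borel_measurable (Fgen M S H R X A k 0 2 \<Otimes>\<^sub>M S)"
    and Q_range: "\<And>k h w x a. k \<in> {1..K} \<Longrightarrow> h \<in> {1..H} \<Longrightarrow> w \<in> space M \<Longrightarrow> x \<in> space S \<Longrightarrow>
                   0 \<le> Q k w h x a \<and> Q k w h x a \<le> real (H - h + 1)"
    and act: "\<And>k h a. k \<in> {1..K} \<Longrightarrow> h \<in> {1..H} \<Longrightarrow>
               AE w in M. real_cond_exp M (Fgen M S H R X A k (h - 1) 2) (\<lambda>w. indicator {a} (A k h w)) w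
                          = pmf (Pol k w h (X k h w)) a"
    and trans: "\<And>k h g B. k \<in> {1..K} \<Longrightarrow> h \<in> {1..<H} \<Longrightarrow>
               g \<in> borel_measurable (Fgen M S H R X A k h 1 \<Otimes>\<^sub>M S) \<Longrightarrow> (\<forall>z. \<bar>g z\<bar> \<le> B) \<Longrightarrow>
               AE w in M. real_cond_exp M (Fgen M S H R X A k h 1) (\<lambda>w. g (w, X k (Suc h) w)) w
                          = (\<integral>y. g (w, y) \<partial>(P h (X k h w) (A k h w)))"
  shows "is_martingale M (Ft M S H R X A) (Mart P H K R Pol Q X A) (2 * H * K) \<and>
    (\<forall>w\<in>space M. \<forall>ps\<in>policies S.
       (\<forall>pol\<in>policies S. (\<Sum>k=1..K. Vpi P H (R k w) pol 1 (X k 1 w))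
                          \<le> (\<Sum>k=1..K. Vpi P H (R k w) ps 1 (X k 1 w))) \<longrightarrow>
       Regret S P H K R Pol X w
         = (\<Sum>k=1..K. Vpi P H (R k w) ps 1 (X k 1 w) - Vpi P H (R k w) (Pol k w) 1 (X k 1 w))
     \<and> (\<Sum>k=1..K. Vpi P H (R k w) ps 1 (X k 1 w) - Vpi P H (R k w) (Pol k w) 1 (X k 1 w))
         = (\<Sum>k=1..K. \<Sum>h=1..H. Epi P ps h
                (\<lambda>y b. \<Sum>c\<in>UNIV. (pmf (ps h y) c - pmf (Pol k w h y) c) * Q k w h y c) (X k 1 w))
           + Mart P H K R Pol Q X A (tidx H K H 2) w
           + (\<Sum>k=1..K. \<Sum>h=1..H.
                Epi P ps h (iota P H (R k w) (Pol k w) (Q k w) h) (X k 1 w)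
                - iota P H (R k w) (Pol k w) (Q k w) h (X k h w) (A k h w)))"
  proof -
  interpret oppo M S P H K x1 R Pol Q X A
    by (rule oppo.intro) (fact assms)+
  show ?thesis
  proof (intro conjI ballI impI)
    show "is_martingale M (Ft M S H R X A) (Mart P H K R Pol Q X A) (2 * H * K)" by (rule martingale)
  next
    fix w and ps :: "nat \<Rightarrow> 's \<Rightarrow> 'a pmf" assume w: "w \<in> space M" and ps: "ps \<in> policies S"
      and opt: "\<forall>pol\<in>policies S. (\<Sum>k=1..K. Vpi P H (R k w) pol 1 (X k 1 w))
                          \<le> (\<Sum>k=1..K. Vpi P H (R k w) ps 1 (X k 1 w))"
    have "(SUP pol\<in>policies S. \<Sum>k=1..K. Vpi P H (R k w) pol 1 (X k 1 w))
        = (\<Sum>k=1..K. Vpi P H (R k w) ps 1 (X k 1 w))"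
      by (rule cSup_eq_maximum) (use ps opt in auto)
    then show "Regret S P H K R Pol X w
         = (\<Sum>k=1..K. Vpi P H (R k w) ps 1 (X k 1 w) - Vpi P H (R k w) (Pol k w) 1 (X k 1 w))"
      by (simp add: Regret_def sum_subtractf)
  next
    fix w and ps :: "nat \<Rightarrow> 's \<Rightarrow> 'a pmf" assume w: "w \<in> space M" and ps: "ps \<in> policies S"
    have "(\<Sum>k=1..K. Vpi P H (R k w) ps 1 (X k 1 w) - Vpi P H (R k w) (Pol k w) 1 (X k 1 w))
       = (\<Sum>k=1..K. (\<Sum>h=1..H. Epi P ps h (\<lambda>y b. \<Sum>c\<in>UNIV. (pmf (ps h y) c - pmf (Pol k w h y) c) * Q k w h y c) (X k 1 w))
       + (\<Sum>h=1..H. D1 P H R Pol Q X A k h w + D2 P H R Pol Q X A k h w)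
       + (\<Sum>h=1..H. Epi P ps h (iota P H (R k w) (Pol k w) (Q k w) h) (X k 1 w)
           - iota P H (R k w) (Pol k w) (Q k w) h (X k h w) (A k h w)))"
      by (rule sum.cong[OF refl]) (rule episode_identity[OF _ w ps])
    then show "(\<Sum>k=1..K. Vpi P H (R k w) ps 1 (X k 1 w) - Vpi P H (R k w) (Pol k w) 1 (X k 1 w))
         = (\<Sum>k=1..K. \<Sum>h=1..H. Epi P ps h
                (\<lambda>y b. \<Sum>c\<in>UNIV. (pmf (ps h y) c - pmf (Pol k w h y) c) * Q k w h y c) (X k 1 w))
           + Mart P H K R Pol Q X A (tidx H K H 2) w
           + (\<Sum>k=1..K. \<Sum>h=1..H.
                Epi P ps h (iota P H (R k w) (Pol k w) (Q k w) h) (X k 1 w)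
                - iota P H (R k w) (Pol k w) (Q k w) h (X k h w) (A k h w))"
      unfolding Mart_full by (simp add: sum.distrib)
  qed
qed

end
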